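(* In the setting of the context, suppose the family $\{a_{v,\sigma}\}_{v\in\mathcal{V}_L^W}$ is connected (in the sense defined in the context). Let $U>0$, $H=H_{\mathrm{hop}}+U\sum_{v\in\mathcal{V}_L}n_{v,\uparrow}n_{v,\downarrow}$, and $N_e=|\mathcal{V}_L^W|$. Then the ground-state energy of $H$ is $0$ and every ground state of $H$ is a linear combination of $\Phi_\uparrow=\big(\prod_{v\in\mathcal{V}_L^W}a^\dagger_{v,\uparrow}\big)\Phi_0$ and its $SU(2)$ spin rotations.
   Context: Construction. Let $G_l=(V_l,E_l)$, $l=1,\dots,L$, be complete graphs with $|V_l|\ge 2$. In each $V_l$ one vertex $v_l^0$ is painted black, the others white. Set $\mathcal{G}_1=G_1$. For $l=2,\dots,L$: choose an integer $z_l$ with $0<z_l\le |V_l|-1$, choose $z_l$ white vertices of $V_l$ and identify each with a vertex (black or white; distinct with distinct) of $\mathcal{V}_{l-1}$; $\mathcal{V}_l=\mathcal{V}_{l-1}\cup V_l$ with these identifications and $\mathcal{E}_l=\mathcal{E}_{l-1}\cup E_l$. A white vertex identified with a black one becomes black; two identified white vertices stay white; $v_l^0$ is never identified with an earlier vertex. $\mathcal{V}_L^W$ denotes the set of white vertices; $V_l$ is regarded as a subset of $\mathcal{V}_L$. Directed edges: $\vec{\mathcal{E}}_L=\bigcup_l\{(v,v_l^0):v\in V_l\setminus\{v_l^0\}\}$; directed paths (including the trivial path $(v)$), reachable set $R(v)$, number $N(v\to u)$ of directed paths from $v$ to $u$, $|(v\to u)_j|$ the number of vertices on the $j$-th path.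 Fermions $c_{v,\sigma}$ with canonical anticommutation relations, vacuum $\Phi_0$, $n_{v,\sigma}=c^\dagger_{v,\sigma}c_{v,\sigma}$; $b_{l,\sigma}=\sum_{v\in V_l}c_{v,\sigma}$, $H_{\mathrm{hop}}=t\sum_{l}\sum_\sigma b^\dagger_{l,\sigma}b_{l,\sigma}$, $t>0$. For white $v$, $a_{v,\sigma}=\sum_{u\in R(v)}\big(\sum_{j=1}^{N(v\to u)}(-1)^{|(v\to u)_j|-1}\big)c_{u,\sigma}$. Two operators $a_{v,\sigma},a_{v',\sigma}$ are directly connected if some vertex $u$ has $\{c^\dagger_{u,\sigma},a_{v,\sigma}\}\neq0$ and $\{c^\dagger_{u,\sigma},a_{v',\sigma}\}\ne0$; the family is connected if any two members are joined by a chain of directly connected members. *)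

theory Defs
  imports Complex_Main
begin

datatype spin = Up | Dn

type_synonym 'v mode = "'v \<times> spin"
(* a state assigns a complex amplitude to every occupation configuration (finite set of modes) *)
type_synonym 'v state = "'v mode set \<Rightarrow> complex"
type_synonym 'v oper = "'v state \<Rightarrow> 'v state"

(* fixed total order on modes used for the fermionic sign convention *)
definition mode_before :: "('v::linorder) mode \<Rightarrow> 'v mode \<Rightarrow> bool" where
  "mode_before x m \<longleftrightarrow> fst x < fst m \<or> (fst x = fst m \<and> snd x = Up \<and> snd m = Dn)"

definition fsign :: "('v::linorder) mode set \<Rightarrow> 'v mode \<Rightarrow> complex" where
  "fsign S m = (-1) ^ card {x\<in>S. mode_before x m}"

definition cdag :: "('v::linorder) mode \<Rightarrow> 'v oper" where
  "cdag m \<Psi> = (\<lambda>S. if m \<in> S then fsign (S - {m}) m * \<Psi> (S - {m}) else 0)"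

definition cann :: "('v::linorder) mode \<Rightarrow> 'v oper" where
  "cann m \<Psi> = (\<lambda>S. if m \<notin> S then fsign S m * \<Psi> (insert m S) else 0)"

definition numop :: "('v::linorder) mode \<Rightarrow> 'v oper" where
  "numop m \<Psi> = cdag m (cann m \<Psi>)"

definition vacuum :: "'v state" where
  "vacuum = (\<lambda>S. if S = {} then 1 else 0)"

definition zero_op :: "'v oper" where
  "zero_op = (\<lambda>\<Psi> S. 0)"

definition anticomm :: "'v oper \<Rightarrow> 'v oper \<Rightarrow> 'v oper" where
  "anticomm A B = (\<lambda>\<Psi> S. A (B \<Psi>) S + B (A \<Psi>) S)"

definition cspan :: "'v state set \<Rightarrow> 'v state set" where
  "cspan X = {\<Psi>. \<exists>F coef. finite F \<and> F \<subseteq> X \<and> \<Psi> = (\<lambda>S. \<Sum>x\<in>F. coef x * x S)}"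

(* states with exactly n electrons on the vertex set VV *)
definition sector :: "'v set \<Rightarrow> nat \<Rightarrow> 'v state set" where
  "sector VV n = {\<Psi>. \<forall>S. \<Psi> S \<noteq> 0 \<longrightarrow> S \<subseteq> VV \<times> UNIV \<and> card S = n}"

definition is_ground_energy :: "'v oper \<Rightarrow> 'v state set \<Rightarrow> real \<Rightarrow> bool" where
  "is_ground_energy H Sp E \<longleftrightarrow>
     (\<exists>\<Psi>\<in>Sp. \<Psi> \<noteq> (\<lambda>S. 0) \<and> H \<Psi> = (\<lambda>S. of_real E * \<Psi> S)) \<and>
     (\<forall>E' \<Psi>. \<Psi> \<in> Sp \<longrightarrow> \<Psi> \<noteq> (\<lambda>S. 0) \<longrightarrow> H \<Psi> = (\<lambda>S. of_real E' * \<Psi> S) \<longrightarrow> E \<le> E')"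

definition ground_states :: "'v oper \<Rightarrow> 'v state set \<Rightarrow> real \<Rightarrow> 'v state set" where
  "ground_states H Sp E = {\<Psi>\<in>Sp. \<Psi> \<noteq> (\<lambda>S. 0) \<and> H \<Psi> = (\<lambda>S. of_real E * \<Psi> S)}"

(* V l is V_l regarded as a subset of the final vertex set, v0 l is the black vertex v_l^0 *)
definition valid_construction :: "nat \<Rightarrow> (nat \<Rightarrow> 'v set) \<Rightarrow> (nat \<Rightarrow> 'v) \<Rightarrow> bool" where
  "valid_construction L V v0 \<longleftrightarrow>
     L \<ge> 1 \<and>
     (\<forall>l\<in>{1..L}. finite (V l) \<and> card (V l) \<ge> 2 \<and> v0 l \<in> V l) \<and>
     (\<forall>l\<in>{2..L}. V l \<inter> (\<Union>k\<in>{1..<l}. V k) \<noteq> {} \<and> v0 l \<notin> (\<Union>k\<in>{1..<l}. V k))"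

definition allV :: "nat \<Rightarrow> (nat \<Rightarrow> 'v set) \<Rightarrow> 'v set" where
  "allV L V = (\<Union>l\<in>{1..L}. V l)"

definition whiteV :: "nat \<Rightarrow> (nat \<Rightarrow> 'v set) \<Rightarrow> (nat \<Rightarrow> 'v) \<Rightarrow> 'v set" where
  "whiteV L V v0 = allV L V - v0 ` {1..L}"

definition dedge :: "nat \<Rightarrow> (nat \<Rightarrow> 'v set) \<Rightarrow> (nat \<Rightarrow> 'v) \<Rightarrow> 'v \<Rightarrow> 'v \<Rightarrow> bool" where
  "dedge L V v0 x y \<longleftrightarrow> (\<exists>l\<in>{1..L}. y = v0 l \<and> x \<in> V l \<and> x \<noteq> v0 l)"

(* directed paths as nonempty vertex lists; [v] is the trivial path *)
definition dpath :: "nat \<Rightarrow> (nat \<Rightarrow> 'v set) \<Rightarrow> (nat \<Rightarrow> 'v) \<Rightarrow> 'v list \<Rightarrow> bool" where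
  "dpath L V v0 p \<longleftrightarrow> p \<noteq> [] \<and> (\<forall>i. Suc i < length p \<longrightarrow> dedge L V v0 (p ! i) (p ! Suc i))"

definition paths :: "nat \<Rightarrow> (nat \<Rightarrow> 'v set) \<Rightarrow> (nat \<Rightarrow> 'v) \<Rightarrow> 'v \<Rightarrow> 'v \<Rightarrow> 'v list set" where
  "paths L V v0 v u = {p. dpath L V v0 p \<and> hd p = v \<and> last p = u}"

definition reach :: "nat \<Rightarrow> (nat \<Rightarrow> 'v set) \<Rightarrow> (nat \<Rightarrow> 'v) \<Rightarrow> 'v \<Rightarrow> 'v set" where
  "reach L V v0 v = {u. paths L V v0 v u \<noteq> {}}"

definition pcoef :: "nat \<Rightarrow> (nat \<Rightarrow> 'v set) \<Rightarrow> (nat \<Rightarrow> 'v) \<Rightarrow> 'v \<Rightarrow> 'v \<Rightarrow> complex" where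
  "pcoef L V v0 v u = (\<Sum>p\<in>paths L V v0 v u. (-1) ^ (length p - 1))"

definition aop :: "nat \<Rightarrow> (nat \<Rightarrow> 'v set) \<Rightarrow> (nat \<Rightarrow> 'v) \<Rightarrow> ('v::linorder) \<Rightarrow> spin \<Rightarrow> 'v oper" where
  "aop L V v0 v \<sigma> \<Psi> = (\<lambda>S. \<Sum>u\<in>reach L V v0 v. pcoef L V v0 v u * cann (u, \<sigma>) \<Psi> S)"

(* adjoint of aop (coefficients are real) *)
definition adag :: "nat \<Rightarrow> (nat \<Rightarrow> 'v set) \<Rightarrow> (nat \<Rightarrow> 'v) \<Rightarrow> ('v::linorder) \<Rightarrow> spin \<Rightarrow> 'v oper" where
  "adag L V v0 v \<sigma> \<Psi> = (\<lambda>S. \<Sum>u\<in>reach L V v0 v. pcoef L V v0 v u * cdag (u, \<sigma>) \<Psi> S)"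

definition directly_connected :: "nat \<Rightarrow> (nat \<Rightarrow> 'v set) \<Rightarrow> (nat \<Rightarrow> 'v) \<Rightarrow> spin \<Rightarrow> ('v::linorder) \<Rightarrow> 'v \<Rightarrow> bool" where
  "directly_connected L V v0 \<sigma> v v' \<longleftrightarrow>
     (\<exists>u\<in>allV L V. anticomm (cdag (u, \<sigma>)) (aop L V v0 v \<sigma>) \<noteq> zero_op \<and>
                   anticomm (cdag (u, \<sigma>)) (aop L V v0 v' \<sigma>) \<noteq> zero_op)"

definition family_connected :: "nat \<Rightarrow> (nat \<Rightarrow> 'v set) \<Rightarrow> (nat \<Rightarrow> 'v) \<Rightarrow> spin \<Rightarrow> ('v::linorder) set \<Rightarrow> bool" where
  "family_connected L V v0 \<sigma> W \<longleftrightarrow>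
     (\<forall>v\<in>W. \<forall>v'\<in>W. (\<lambda>x y. x \<in> W \<and> y \<in> W \<and> directly_connected L V v0 \<sigma> x y)\<^sup>*\<^sup>* v v')"

definition bop :: "(nat \<Rightarrow> 'v set) \<Rightarrow> nat \<Rightarrow> spin \<Rightarrow> ('v::linorder) oper" where
  "bop V l \<sigma> \<Psi> = (\<lambda>S. \<Sum>v\<in>V l. cann (v, \<sigma>) \<Psi> S)"

definition bdag :: "(nat \<Rightarrow> 'v set) \<Rightarrow> nat \<Rightarrow> spin \<Rightarrow> ('v::linorder) oper" where
  "bdag V l \<sigma> \<Psi> = (\<lambda>S. \<Sum>v\<in>V l. cdag (v, \<sigma>) \<Psi> S)"

definition H_hop :: "nat \<Rightarrow> (nat \<Rightarrow> 'v set) \<Rightarrow> real \<Rightarrow> ('v::linorder) oper" where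
  "H_hop L V t \<Psi> = (\<lambda>S. of_real t * (\<Sum>l\<in>{1..L}. \<Sum>\<sigma>\<in>{Up, Dn}. bdag V l \<sigma> (bop V l \<sigma> \<Psi>) S))"

definition H_hub :: "nat \<Rightarrow> (nat \<Rightarrow> 'v set) \<Rightarrow> real \<Rightarrow> real \<Rightarrow> ('v::linorder) oper" where
  "H_hub L V t U \<Psi> = (\<lambda>S. H_hop L V t \<Psi> S +
       of_real U * (\<Sum>v\<in>allV L V. numop (v, Up) (numop (v, Dn) \<Psi>) S))"

(* (prod_{v in W} A_v) Psi, product written in increasing order of v *)
definition ordered_prod :: "('v::linorder) set \<Rightarrow> ('v \<Rightarrow> 'v oper) \<Rightarrow> 'v state \<Rightarrow> 'v state" where
  "ordered_prod W A \<Psi> = foldr A (sorted_list_of_set W) \<Psi>"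

definition Phi_up :: "nat \<Rightarrow> (nat \<Rightarrow> 'v set) \<Rightarrow> (nat \<Rightarrow> 'v) \<Rightarrow> ('v::linorder) state" where
  "Phi_up L V v0 = ordered_prod (whiteV L V v0) (\<lambda>v. adag L V v0 v Up) vacuum"

(* image of Phi_up under the SU(2) spin rotation g, whose first column is (\<alpha>, \<beta>):
   c^dag_{u,Up} is mapped to \<alpha> c^dag_{u,Up} + \<beta> c^dag_{u,Dn}, and the vacuum is invariant *)
definition adag_rot :: "nat \<Rightarrow> (nat \<Rightarrow> 'v set) \<Rightarrow> (nat \<Rightarrow> 'v) \<Rightarrow> complex \<Rightarrow> complex \<Rightarrow> ('v::linorder) \<Rightarrow> 'v oper" where
  "adag_rot L V v0 \<alpha> \<beta> v \<Psi> = (\<lambda>S. \<alpha> * adag L V v0 v Up \<Psi> S + \<beta> * adag L V v0 v Dn \<Psi> S)"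

definition Phi_rot :: "nat \<Rightarrow> (nat \<Rightarrow> 'v set) \<Rightarrow> (nat \<Rightarrow> 'v) \<Rightarrow> complex \<Rightarrow> complex \<Rightarrow> ('v::linorder) state" where
  "Phi_rot L V v0 \<alpha> \<beta> = ordered_prod (whiteV L V v0) (adag_rot L V v0 \<alpha> \<beta>) vacuum"

definition spin_rotations :: "nat \<Rightarrow> (nat \<Rightarrow> 'v set) \<Rightarrow> (nat \<Rightarrow> 'v) \<Rightarrow> ('v::linorder) state set" where
  "spin_rotations L V v0 = {Phi_rot L V v0 \<alpha> \<beta> | \<alpha> \<beta>. cmod \<alpha> ^ 2 + cmod \<beta> ^ 2 = 1}"

end

theory Submission
  imports Defs "HOL-Analysis.Complex_Transcendental"
begin

lemma UNIV_spin: "(UNIV :: spin set) = {Up, Dn}" using spin.exhaust by auto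

instance spin :: finite
  by standard (simp add: UNIV_spin)

lemma fsign_cases: "fsign S m = 1 \<or> fsign S m = -1"
  unfolding fsign_def by (cases "even (card {x \<in> S. mode_before x m})") auto

lemma fsign_sq[simp]: "fsign S m * fsign S m = 1"
  using fsign_cases[of S m] by auto

lemma fsign_nz[simp]: "fsign S m \<noteq> 0"
  using fsign_cases[of S m] by auto

lemma fsign_cnj[simp]: "cnj (fsign S m) = fsign S m"
  using fsign_cases[of S m] by auto

lemma mode_before_irrefl[simp]: "\<not> mode_before m m"
  unfolding mode_before_def by auto

lemma mode_before_total:
  "m \<noteq> m' \<Longrightarrow> mode_before m m' \<longleftrightarrow> \<not> mode_before m' m"
  unfolding mode_before_def
  by (cases m; cases m'; cases "snd m"; cases "snd m'") auto

lemma fsign_insert: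
  fixes S :: "('v::{finite,linorder}) mode set"
  assumes "x \<notin> S"
  shows "fsign (insert x S) m = (if mode_before x m then -1 else 1) * fsign S m"
proof -
  have fin: "finite {y\<in>S. mode_before y m}" by simp
  show ?thesis
  proof (cases "mode_before x m")
    case True
    then have "{y\<in>insert x S. mode_before y m} = insert x {y\<in>S. mode_before y m}" by auto
    then have "card {y\<in>insert x S. mode_before y m} = Suc (card {y\<in>S. mode_before y m})"
      using assms fin by simp
    then show ?thesis using True unfolding fsign_def by simp
  next
    case False
    then have "{y\<in>insert x S. mode_before y m} = {y\<in>S. mode_before y m}" by auto
    then show ?thesis using False unfolding fsign_def by simp
  qed
qed

lemma car_same:
  fixes \<Psi> :: "('v::{finite,linorder}) state"
  shows "cann m (cdag m \<Psi>) S + cdag m (cann m \<Psi>) S = \<Psi> S"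
proof (cases "m \<in> S")
  case True
  then show ?thesis unfolding cann_def cdag_def
    by (simp add: insert_absorb mult.assoc[symmetric])
next
  case False
  then show ?thesis unfolding cann_def cdag_def
    by (simp add: mult.assoc[symmetric])
qed

lemma car_diff:
  fixes \<Psi> :: "('v::{finite,linorder}) state"
  assumes "m \<noteq> m'"
  shows "cann m (cdag m' \<Psi>) S + cdag m' (cann m \<Psi>) S = 0"
proof (cases "m \<notin> S \<and> m' \<in> S")
  case True
  define A where "A = S - {m'}"
  have mA: "m \<notin> A" and m'A: "m' \<notin> A" and SA: "S = insert m' A" using True A_def by auto
  have e1: "insert m S - {m'} = insert m A" using assms True A_def by auto
  have e2: "insert m (S - {m'}) = insert m A" using A_def by simp
  have s1: "fsign S m = (if mode_before m' m then -1 else 1) * fsign A m"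
    using SA fsign_insert[OF m'A] by simp
  have s2: "fsign (insert m A) m' = (if mode_before m m' then -1 else 1) * fsign A m'"
    using fsign_insert[OF mA] by simp
  have tot: "mode_before m m' \<longleftrightarrow> \<not> mode_before m' m" using mode_before_total[OF assms] .
  have "cann m (cdag m' \<Psi>) S = fsign S m * (fsign (insert m A) m' * \<Psi> (insert m A))"
    unfolding cann_def cdag_def using True e1 by simp
  moreover have "cdag m' (cann m \<Psi>) S = fsign A m' * (fsign A m * \<Psi> (insert m A))"
    unfolding cann_def cdag_def using True A_def mA by simp
  ultimately show ?thesis using s1 s2 tot by (auto simp: algebra_simps)
next
  case False
  then show ?thesis unfolding cann_def cdag_def using assms by auto
qed

lemma cann_vacuum: "cann m vacuum = (\<lambda>S. 0)"
  unfolding cann_def vacuum_def by auto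

lemma cann_lin:
  "cann m (\<lambda>S. \<Sum>x\<in>A. k x * f x S) S = (\<Sum>x\<in>A. k x * cann m (f x) S)"
  unfolding cann_def by (auto simp: sum_distrib_left algebra_simps)

lemma cdag_lin:
  "cdag m (\<lambda>S. \<Sum>x\<in>A. k x * f x S) S = (\<Sum>x\<in>A. k x * cdag m (f x) S)"
  unfolding cdag_def by (auto simp: sum_distrib_left algebra_simps)

lemma cann_add: "cann m (\<lambda>S. \<Psi> S + \<Phi> S) S = cann m \<Psi> S + cann m \<Phi> S"
  unfolding cann_def by (auto simp: algebra_simps)
lemma cdag_add: "cdag m (\<lambda>S. \<Psi> S + \<Phi> S) S = cdag m \<Psi> S + cdag m \<Phi> S"
  unfolding cdag_def by (auto simp: algebra_simps)
lemma cann_smult: "cann m (\<lambda>S. c * \<Psi> S) S = c * cann m \<Psi> S"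
  unfolding cann_def by (auto simp: algebra_simps)
lemma cdag_smult: "cdag m (\<lambda>S. c * \<Psi> S) S = c * cdag m \<Psi> S"
  unfolding cdag_def by (auto simp: algebra_simps)
lemma cann_zero: "cann m (\<lambda>S. 0) S = 0"
  unfolding cann_def by auto
lemma cdag_zero: "cdag m (\<lambda>S. 0) S = 0"
  unfolding cdag_def by auto
lemma cann_sum: "cann m (\<lambda>S. \<Sum>x\<in>A. f x S) S = (\<Sum>x\<in>A. cann m (f x) S)"
  using cann_lin[of m "\<lambda>_. 1" f A S] by simp
lemma cdag_sum: "cdag m (\<lambda>S. \<Sum>x\<in>A. f x S) S = (\<Sum>x\<in>A. cdag m (f x) S)"
  using cdag_lin[of m "\<lambda>_. 1" f A S] by simp

lemma numop_eq: "numop m \<Psi> S = (if m \<in> S then \<Psi> S else 0)"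
  unfolding numop_def cdag_def cann_def by (auto simp: insert_absorb mult.assoc[symmetric])

definition ip :: "('v::finite) state \<Rightarrow> 'v state \<Rightarrow> complex" where
  "ip X Y = (\<Sum>S\<in>UNIV. cnj (X S) * Y S)"

lemma ip_cdag:
  fixes X :: "('v::{finite,linorder}) state"
  shows "ip X (cdag m Y) = ip (cann m X) Y"
proof -
  have "ip X (cdag m Y) = (\<Sum>S\<in>{S. m \<in> S}. cnj (X S) * (fsign (S - {m}) m * Y (S - {m})))"
    unfolding ip_def cdag_def by (rule sum.mono_neutral_cong_right) auto
  also have "\<dots> = (\<Sum>T\<in>{T. m \<notin> T}. cnj (X (insert m T)) * (fsign T m * Y T))"
  proof (rule sum.reindex_bij_witness[where i="\<lambda>T. insert m T" and j="\<lambda>S. S - {m}"])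
  qed (auto simp: insert_absorb)
  also have "\<dots> = ip (cann m X) Y"
    unfolding ip_def cann_def by (rule sum.mono_neutral_cong_left) (auto simp: algebra_simps)
  finally show ?thesis .
qed

lemma ip_self_nonneg: "ip X X = of_real (\<Sum>S\<in>UNIV. (cmod (X S))^2)"
  unfolding ip_def of_real_sum
proof (intro sum.cong refl)
  fix S show "cnj (X S) * X S = of_real ((cmod (X S))^2)"
    by (simp only: complex_norm_square mult.commute)
qed

lemma ip_self_zero:
  fixes X :: "('v::finite) state"
  shows "(\<Sum>S\<in>UNIV. (cmod (X S))^2) = 0 \<longleftrightarrow> X = (\<lambda>S. 0)"
  by (auto simp: sum_nonneg_eq_0_iff)


locale cons =
  fixes L :: nat and V :: "nat \<Rightarrow> ('v::{finite,linorder}) set" and v0 :: "nat \<Rightarrow> 'v"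
  assumes vc: "valid_construction L V v0"
begin

abbreviation "W \<equiv> whiteV L V v0"
abbreviation "AV \<equiv> allV L V"
abbreviation "Bl \<equiv> v0 ` {1..L}"

lemma L_pos: "L \<ge> 1" using vc unfolding valid_construction_def by auto

lemma V_fin: "l \<in> {1..L} \<Longrightarrow> finite (V l)" using vc unfolding valid_construction_def by auto
lemma v0_in: "l \<in> {1..L} \<Longrightarrow> v0 l \<in> V l" using vc unfolding valid_construction_def by auto
lemma V_card: "l \<in> {1..L} \<Longrightarrow> card (V l) \<ge> 2" using vc unfolding valid_construction_def by auto

lemma v0_notin: "l \<in> {1..L} \<Longrightarrow> k \<in> {1..L} \<Longrightarrow> k < l \<Longrightarrow> v0 l \<notin> V k"
proof -
  assume a: "l \<in> {1..L}" "k \<in> {1..L}" "k < l"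
  then have "l \<in> {2..L}" by auto
  then have "v0 l \<notin> (\<Union>k\<in>{1..<l}. V k)" using vc unfolding valid_construction_def by blast
  then show ?thesis using a by auto
qed

lemma v0_inj: "l \<in> {1..L} \<Longrightarrow> k \<in> {1..L} \<Longrightarrow> v0 l = v0 k \<Longrightarrow> l = k"
  by (metis linorder_neqE_nat v0_in v0_notin)

lemma AV_fin: "finite AV" unfolding allV_def using V_fin by auto

lemma V_sub_AV: "l \<in> {1..L} \<Longrightarrow> V l \<subseteq> AV" unfolding allV_def by auto

lemma Bl_sub_AV: "Bl \<subseteq> AV" using v0_in V_sub_AV by blast

lemma W_fin: "finite W" unfolding whiteV_def using AV_fin by auto

lemma white_not_black: "v \<in> W \<Longrightarrow> v \<notin> Bl" unfolding whiteV_def by auto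
lemma white_AV: "v \<in> W \<Longrightarrow> v \<in> AV" unfolding whiteV_def by auto
lemma AV_split: "v \<in> AV \<Longrightarrow> v \<notin> Bl \<Longrightarrow> v \<in> W" unfolding whiteV_def by auto

lemma dedge_black: "dedge L V v0 x y \<Longrightarrow> \<exists>l\<in>{1..L}. y = v0 l \<and> x \<in> V l \<and> x \<noteq> v0 l"
  unfolding dedge_def by auto

lemma dedge_from_black:
  assumes "dedge L V v0 (v0 k) y" "k \<in> {1..L}"
  shows "\<exists>l\<in>{1..L}. y = v0 l \<and> k < l"
proof -
  obtain l where l: "l \<in> {1..L}" "y = v0 l" "v0 k \<in> V l" "v0 k \<noteq> v0 l"
    using dedge_black[OF assms(1)] by blast
  have "k \<noteq> l" using l by auto
  moreover have "\<not> l < k" using v0_notin[OF assms(2) l(1)] l by auto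
  ultimately show ?thesis using l by auto
qed

lemma dpath_levels:
  assumes "dpath L V v0 p"
  shows "1 \<le> i \<Longrightarrow> i < length p \<Longrightarrow> \<exists>l\<in>{1..L}. p ! i = v0 l \<and> i \<le> l"
proof (induction i)
  case 0 then show ?case by simp
next
  case (Suc i)
  have e: "dedge L V v0 (p ! i) (p ! Suc i)" using assms Suc.prems unfolding dpath_def by auto
  show ?case
  proof (cases "i = 0")
    case True
    then show ?thesis using dedge_black[OF e] by force
  next
    case False
    then obtain k where k: "k \<in> {1..L}" "p ! i = v0 k" "i \<le> k" using Suc by auto
    obtain l where "l \<in> {1..L}" "p ! Suc i = v0 l" "k < l"
      using dedge_from_black[of k "p ! Suc i"] e k by auto
    then show ?thesis using k by auto
  qed
qed

lemma dpath_length: "dpath L V v0 p \<Longrightarrow> length p \<le> Suc L"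
proof -
  assume d: "dpath L V v0 p"
  show ?thesis
  proof (cases "length p \<le> 1")
    case True then show ?thesis by simp
  next
    case False
    then have "1 \<le> length p - 1" "length p - 1 < length p" by auto
    then obtain l where "l \<in> {1..L}" "length p - 1 \<le> l"
      using dpath_levels[OF d, of "length p - 1"] by blast
    then show ?thesis by auto
  qed
qed

lemma paths_fin: "finite (paths L V v0 v u)"
proof -
  have "paths L V v0 v u \<subseteq> {p. set p \<subseteq> UNIV \<and> length p \<le> Suc L}"
    unfolding paths_def using dpath_length by auto
  moreover have "finite {p. set p \<subseteq> (UNIV::'v set) \<and> length p \<le> Suc L}"
    by (rule finite_lists_length_le) simp
  ultimately show ?thesis by (rule finite_subset)
qed

lemma reach_black: "u \<in> reach L V v0 v \<Longrightarrow> u \<noteq> v \<Longrightarrow> u \<in> Bl"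
proof -
  assume a: "u \<in> reach L V v0 v" "u \<noteq> v"
  then obtain p where p: "dpath L V v0 p" "hd p = v" "last p = u"
    unfolding reach_def paths_def by auto
  have ne: "p \<noteq> []" using p unfolding dpath_def by auto
  have "length p \<noteq> 1"
  proof
    assume "length p = 1"
    then obtain x where "p = [x]" by (cases p) auto
    then show False using p a by simp
  qed
  then have "1 \<le> length p - 1" "length p - 1 < length p" using ne length_greater_0_conv[of p] by (linarith, linarith)
  then obtain l where l: "l \<in> {1..L}" "p ! (length p - 1) = v0 l"
    using dpath_levels[OF p(1)] by blast
  then have "u = v0 l" using p(3) ne by (simp add: last_conv_nth)
  then show ?thesis using l(1) by blast
qed

lemma paths_white_self:
  assumes "v \<in> W" shows "paths L V v0 v v = {[v]}"
proof
  show "{[v]} \<subseteq> paths L V v0 v v" unfolding paths_def dpath_def by auto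
  show "paths L V v0 v v \<subseteq> {[v]}"
  proof
    fix p assume p: "p \<in> paths L V v0 v v"
    then have d: "dpath L V v0 p" "hd p = v" "last p = v" unfolding paths_def by auto
    have ne: "p \<noteq> []" using d unfolding dpath_def by auto
    show "p \<in> {[v]}"
    proof (cases "length p = 1")
      case True
      then obtain x where "p = [x]" by (cases p) auto
      then show ?thesis using d by simp
    next
      case False
      then have "1 \<le> length p - 1" "length p - 1 < length p" using ne length_greater_0_conv[of p] by (linarith, linarith)
      then obtain l where l: "l \<in> {1..L}" "p ! (length p - 1) = v0 l"
        using dpath_levels[OF d(1)] by blast
      then have "v = v0 l" using d(3) ne by (simp add: last_conv_nth)
      then have "v \<in> Bl" using l(1) by blast
      then show ?thesis using white_not_black[OF assms] by simp
    qed
  qed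
qed

lemma pcoef_self: "v \<in> W \<Longrightarrow> pcoef L V v0 v v = 1"
  unfolding pcoef_def by (simp add: paths_white_self)

lemma reach_self: "v \<in> W \<Longrightarrow> v \<in> reach L V v0 v"
  unfolding reach_def using paths_white_self by auto

lemma pcoef_out: "u \<notin> reach L V v0 v \<Longrightarrow> pcoef L V v0 v u = 0"
  unfolding pcoef_def reach_def by auto

lemma reach_AV: "v \<in> W \<Longrightarrow> reach L V v0 v \<subseteq> AV"
  using reach_black white_AV Bl_sub_AV by blast

lemma dpath_snoc:
  assumes "p \<noteq> []"
  shows "dpath L V v0 (p @ [y]) \<longleftrightarrow> dpath L V v0 p \<and> dedge L V v0 (last p) y"
proof -
  have A: "\<And>i. Suc i < length p \<Longrightarrow> (p @ [y]) ! i = p ! i \<and> (p @ [y]) ! Suc i = p ! Suc i"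
    by (simp add: nth_append)
  have B: "(p @ [y]) ! (length p - 1) = last p" "(p @ [y]) ! Suc (length p - 1) = y"
    using assms by (auto simp: nth_append last_conv_nth)
  show ?thesis
  proof
    assume d: "dpath L V v0 (p @ [y])"
    have "dpath L V v0 p" unfolding dpath_def
    proof (intro conjI allI impI)
      show "p \<noteq> []" by fact
      fix i assume i: "Suc i < length p"
      then have "dedge L V v0 ((p @ [y]) ! i) ((p @ [y]) ! Suc i)"
        using d unfolding dpath_def by simp
      then show "dedge L V v0 (p ! i) (p ! Suc i)" using A[OF i] by simp
    qed
    moreover have "dedge L V v0 (last p) y"
    proof -
      have "Suc (length p - 1) < length (p @ [y])" using assms by simp
      then have "dedge L V v0 ((p @ [y]) ! (length p - 1)) ((p @ [y]) ! Suc (length p - 1))"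
        using d unfolding dpath_def by blast
      then show ?thesis using B by simp
    qed
    ultimately show "dpath L V v0 p \<and> dedge L V v0 (last p) y" by simp
  next
    assume d: "dpath L V v0 p \<and> dedge L V v0 (last p) y"
    show "dpath L V v0 (p @ [y])" unfolding dpath_def
    proof (intro conjI allI impI)
      show "p @ [y] \<noteq> []" by simp
      fix i assume i: "Suc i < length (p @ [y])"
      show "dedge L V v0 ((p @ [y]) ! i) ((p @ [y]) ! Suc i)"
      proof (cases "Suc i < length p")
        case True then show ?thesis using d A[of i] unfolding dpath_def by auto
      next
        case False
        then have "i = length p - 1" using i by auto
        then show ?thesis using d B by simp
      qed
    qed
  qed
qed

lemma paths_v0:
  assumes v: "v \<in> W" and l: "l \<in> {1..L}"
  shows "paths L V v0 v (v0 l) = (\<lambda>p. p @ [v0 l]) ` (\<Union>x\<in>V l - {v0 l}. paths L V v0 v x)"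
proof
  show "(\<lambda>p. p @ [v0 l]) ` (\<Union>x\<in>V l - {v0 l}. paths L V v0 v x) \<subseteq> paths L V v0 v (v0 l)"
  proof
    fix q assume "q \<in> (\<lambda>p. p @ [v0 l]) ` (\<Union>x\<in>V l - {v0 l}. paths L V v0 v x)"
    then obtain p x where px: "x \<in> V l" "x \<noteq> v0 l" "p \<in> paths L V v0 v x" "q = p @ [v0 l]" by auto
    have d: "dpath L V v0 p" "hd p = v" "last p = x" "p \<noteq> []"
      using px(3) unfolding paths_def dpath_def by auto
    have "dedge L V v0 x (v0 l)" unfolding dedge_def using px l by auto
    then have "dpath L V v0 q" using dpath_snoc[OF d(4)] d px(4) by simp
    then show "q \<in> paths L V v0 v (v0 l)" unfolding paths_def using px(4) d by simp
  qed
  show "paths L V v0 v (v0 l) \<subseteq> (\<lambda>p. p @ [v0 l]) ` (\<Union>x\<in>V l - {v0 l}. paths L V v0 v x)"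
  proof
    fix q assume q: "q \<in> paths L V v0 v (v0 l)"
    then have d: "dpath L V v0 q" "hd q = v" "last q = v0 l" unfolding paths_def by auto
    have ne: "q \<noteq> []" using d unfolding dpath_def by auto
    define p where "p = butlast q"
    have qp: "q = p @ [v0 l]" using ne d p_def by (metis append_butlast_last_id)
    have pne: "p \<noteq> []"
    proof
      assume "p = []"
      then have "q = [v0 l]" using qp by simp
      then have "v = v0 l" using d by simp
      then show False using white_not_black[OF v] l by auto
    qed
    have dp: "dpath L V v0 p" "dedge L V v0 (last p) (v0 l)" using d(1) qp dpath_snoc[OF pne] by auto
    obtain l' where l': "l' \<in> {1..L}" "v0 l = v0 l'" "last p \<in> V l'" "last p \<noteq> v0 l'"
      using dedge_black[OF dp(2)] by auto
    have "l' = l" using v0_inj[OF l l'(1) l'(2)] by simp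
    then have "last p \<in> V l - {v0 l}" using l' by auto
    moreover have "p \<in> paths L V v0 v (last p)" unfolding paths_def using dp pne d(2) qp by simp
    ultimately show "q \<in> (\<lambda>p. p @ [v0 l]) ` (\<Union>x\<in>V l - {v0 l}. paths L V v0 v x)"
      using qp by blast
  qed
qed

lemma pcoef_sum_zero:
  assumes v: "v \<in> W" and l: "l \<in> {1..L}"
  shows "(\<Sum>u\<in>V l. pcoef L V v0 v u) = 0"
proof -
  let ?P = "\<lambda>x. paths L V v0 v x"
  have fin: "finite (V l)" using V_fin[OF l] .
  have "pcoef L V v0 v (v0 l) = (\<Sum>q\<in>(\<lambda>p. p @ [v0 l]) ` (\<Union>x\<in>V l - {v0 l}. ?P x). (-1) ^ (length q - 1))"
    unfolding pcoef_def using paths_v0[OF v l] by simp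
  also have "\<dots> = (\<Sum>p\<in>(\<Union>x\<in>V l - {v0 l}. ?P x). (-1) ^ (length p))"
    by (subst sum.reindex) (auto simp: inj_on_def)
  also have "\<dots> = (\<Sum>x\<in>V l - {v0 l}. \<Sum>p\<in>?P x. (-1) ^ (length p))"
    apply (rule sum.UNION_disjoint)
    apply (simp add: fin)
    apply (simp add: paths_fin)
    apply (auto simp: paths_def)
    done
  also have "\<dots> = (\<Sum>x\<in>V l - {v0 l}. - pcoef L V v0 v x)"
  proof (intro sum.cong refl)
    fix x
    have "\<And>p. p \<in> ?P x \<Longrightarrow> (-1::complex) ^ length p = - ((-1) ^ (length p - 1))"
    proof -
      fix p assume "p \<in> ?P x"
      then have "length p \<ge> 1" unfolding paths_def dpath_def by (auto simp: Suc_le_eq)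
      then have "length p = Suc (length p - 1)" by simp
      then show "(-1::complex) ^ length p = - ((-1) ^ (length p - 1))" by (metis power_Suc mult_minus1)
    qed
    then show "(\<Sum>p\<in>?P x. (-1::complex) ^ (length p)) = - pcoef L V v0 v x"
      unfolding pcoef_def by (simp add: sum_negf)
  qed
  also have "\<dots> = - (\<Sum>x\<in>V l - {v0 l}. pcoef L V v0 v x)" by (simp add: sum_negf)
  finally have e: "pcoef L V v0 v (v0 l) = - (\<Sum>x\<in>V l - {v0 l}. pcoef L V v0 v x)" .
  have "(\<Sum>u\<in>V l. pcoef L V v0 v u) = pcoef L V v0 v (v0 l) + (\<Sum>x\<in>V l - {v0 l}. pcoef L V v0 v x)"
    using fin v0_in[OF l] by (simp add: sum.remove)
  then show ?thesis using e by simp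
qed

end


definition sp :: "'v set \<Rightarrow> 'v \<Rightarrow> spin" where
  "sp D v = (if v \<in> D then Dn else Up)"

definition gr :: "('v \<Rightarrow> spin) \<Rightarrow> 'v set \<Rightarrow> 'v mode set" where
  "gr s A = (\<lambda>x. (x, s x)) ` A"

fun epsl :: "('v::linorder) list \<Rightarrow> complex" where
  "epsl [] = 1"
| "epsl (v # vs) = (-1) ^ card {x \<in> set vs. x < v} * epsl vs"

lemma epsl_nz: "epsl vs \<noteq> 0"
  by (induction vs) auto

definition bfree :: "'v set \<Rightarrow> 'v mode set \<Rightarrow> bool" where
  "bfree B T \<longleftrightarrow> (\<forall>m\<in>T. fst m \<notin> B)"

lemma fsign_gr:
  fixes s :: "('v::{finite,linorder}) \<Rightarrow> spin"
  assumes "v \<notin> A"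
  shows "fsign (gr s A) (v, \<sigma>) = (-1) ^ card {x \<in> A. x < v}"
proof -
  have "{y \<in> gr s A. mode_before y (v, \<sigma>)} = (\<lambda>x. (x, s x)) ` {x \<in> A. x < v}"
    unfolding gr_def mode_before_def using assms by auto
  moreover have "card ((\<lambda>x. (x, s x)) ` {x \<in> A. x < v}) = card {x \<in> A. x < v}"
    by (rule card_image) (auto simp: inj_on_def)
  ultimately show ?thesis unfolding fsign_def by simp
qed

context cons
begin

abbreviation "ad \<equiv> adag L V v0"
abbreviation "pc \<equiv> pcoef L V v0"
abbreviation "rc \<equiv> reach L V v0"

lemma adag_lin:
  "ad v \<tau> (\<lambda>S. \<Sum>x\<in>A. k x * f x S) S = (\<Sum>x\<in>A. k x * ad v \<tau> (f x) S)"
  unfolding adag_def by (simp add: cdag_lin sum_distrib_left sum.swap[of _ A] algebra_simps)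

lemma adag_sum:
  "ad v \<tau> (\<lambda>S. \<Sum>x\<in>A. f x S) S = (\<Sum>x\<in>A. ad v \<tau> (f x) S)"
  using adag_lin[of v \<tau> "\<lambda>_. 1" f A S] by simp

lemma adag_zero: "ad v \<tau> (\<lambda>S. 0) S = 0"
  unfolding adag_def by (simp add: cdag_zero)

lemma adag_smult: "ad v \<tau> (\<lambda>S. c * X S) S = c * ad v \<tau> X S"
  unfolding adag_def by (simp add: cdag_smult sum_distrib_left algebra_simps)

lemma adag_add: "ad v \<tau> (\<lambda>S. X S + Y S) S = ad v \<tau> X S + ad v \<tau> Y S"
  unfolding adag_def by (simp add: cdag_add sum.distrib algebra_simps)

lemma adag_diff: "ad v \<tau> (\<lambda>S. X S - Y S) S = ad v \<tau> X S - ad v \<tau> Y S"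
proof -
  have "ad v \<tau> (\<lambda>S. X S + (-1) * Y S) S = ad v \<tau> X S + (-1) * ad v \<tau> Y S"
    by (simp only: adag_add adag_smult)
  then show ?thesis by simp
qed

lemma car_adag:
  assumes "v \<in> W"
  shows "cann (u, \<sigma>) (ad v \<tau> X) S + ad v \<tau> (cann (u, \<sigma>) X) S
         = (if \<sigma> = \<tau> then pc v u else 0) * X S"
proof -
  have fin: "finite (rc v)" by simp
  have "cann (u, \<sigma>) (ad v \<tau> X) S + ad v \<tau> (cann (u, \<sigma>) X) S
      = (\<Sum>x\<in>rc v. pc v x * (cann (u, \<sigma>) (cdag (x, \<tau>) X) S + cdag (x, \<tau>) (cann (u, \<sigma>) X) S))"
  proof -
    have a: "cann (u,\<sigma>) (ad v \<tau> X) S = (\<Sum>x\<in>rc v. pc v x * cann (u,\<sigma>) (cdag (x,\<tau>) X) S)"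
      unfolding adag_def by (rule cann_lin)
    have b: "ad v \<tau> (cann (u,\<sigma>) X) S = (\<Sum>x\<in>rc v. pc v x * cdag (x,\<tau>) (cann (u,\<sigma>) X) S)"
      unfolding adag_def by simp
    show ?thesis by (simp only: a b sum.distrib[symmetric] distrib_left)
  qed
  also have "\<dots> = (\<Sum>x\<in>rc v. pc v x * (if (u, \<sigma>) = (x, \<tau>) then X S else 0))"
  proof (intro sum.cong refl)
    fix x show "pc v x * (cann (u, \<sigma>) (cdag (x, \<tau>) X) S + cdag (x, \<tau>) (cann (u, \<sigma>) X) S)
      = pc v x * (if (u, \<sigma>) = (x, \<tau>) then X S else 0)"
      using car_same[of "(u,\<sigma>)" X S] car_diff[of "(u,\<sigma>)" "(x,\<tau>)" X S] by auto
  qed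
  also have "\<dots> = (if \<sigma> = \<tau> then pc v u else 0) * X S"
  proof (cases "\<sigma> = \<tau> \<and> u \<in> rc v")
    case True
    then have "(\<Sum>x\<in>rc v. pc v x * (if (u, \<sigma>) = (x, \<tau>) then X S else 0))
        = (\<Sum>x\<in>{u}. pc v x * X S)"
      by (intro sum.mono_neutral_cong_right) auto
    then show ?thesis using True by simp
  next
    case False
    then have "(\<Sum>x\<in>rc v. pc v x * (if (u, \<sigma>) = (x, \<tau>) then X S else 0)) = 0"
      by (intro sum.neutral) auto
    then show ?thesis using False pcoef_out by auto
  qed
  finally show ?thesis .
qed

lemma cann_adag:
  assumes "v \<in> W"
  shows "cann (u, \<sigma>) (ad v \<tau> X) S = (if \<sigma> = \<tau> then pc v u else 0) * X S - ad v \<tau> (cann (u, \<sigma>) X) S"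
  using car_adag[OF assms, of u \<sigma> \<tau> X S] by (simp add: algebra_simps)

lemma bop_adag:
  assumes v: "v \<in> W" and l: "l \<in> {1..L}"
  shows "bop V l \<sigma> (ad v \<tau> X) S = - ad v \<tau> (bop V l \<sigma> X) S"
proof -
  have "bop V l \<sigma> (ad v \<tau> X) S = (\<Sum>u\<in>V l. (if \<sigma> = \<tau> then pc v u else 0) * X S - ad v \<tau> (cann (u, \<sigma>) X) S)"
    unfolding bop_def using cann_adag[OF v] by simp
  also have "\<dots> = (if \<sigma> = \<tau> then (\<Sum>u\<in>V l. pc v u) else 0) * X S - (\<Sum>u\<in>V l. ad v \<tau> (cann (u, \<sigma>) X) S)"
    by (simp add: sum_subtractf sum_distrib_right)
  also have "\<dots> = - (\<Sum>u\<in>V l. ad v \<tau> (cann (u, \<sigma>) X) S)"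
    using pcoef_sum_zero[OF v l] by simp
  also have "\<dots> = - ad v \<tau> (bop V l \<sigma> X) S"
    unfolding bop_def by (simp add: adag_sum)
  finally show ?thesis .
qed

lemma bop_vacuum: "bop V l \<sigma> vacuum = (\<lambda>S. 0)"
  unfolding bop_def by (simp add: cann_vacuum)

lemma bop_prod:
  assumes "set vs \<subseteq> W" and l: "l \<in> {1..L}"
  shows "bop V l \<sigma> (foldr (\<lambda>v. ad v (s v)) vs vacuum) = (\<lambda>S. 0)"
  using assms(1)
proof (induction vs)
  case Nil then show ?case by (simp add: bop_vacuum)
next
  case (Cons v vs)
  show ?case
  proof
    fix S
    have "bop V l \<sigma> (foldr (\<lambda>v. ad v (s v)) (v # vs) vacuum) S
        = - ad v (s v) (bop V l \<sigma> (foldr (\<lambda>v. ad v (s v)) vs vacuum)) S"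
      using bop_adag[of v l \<sigma> "s v"] Cons.prems l by simp
    also have "\<dots> = 0" using Cons by (simp add: adag_zero)
    finally show "bop V l \<sigma> (foldr (\<lambda>v. ad v (s v)) (v # vs) vacuum) S = 0" .
  qed
qed

lemma adag_bfree:
  assumes v: "v \<in> W" and T: "bfree Bl T"
  shows "ad v \<sigma> X T = cdag (v, \<sigma>) X T"
proof -
  have "ad v \<sigma> X T = (\<Sum>x\<in>{v}. pc v x * cdag (x, \<sigma>) X T)"
    unfolding adag_def
  proof (rule sum.mono_neutral_cong_right)
    show "{v} \<subseteq> rc v" using reach_self[OF v] by simp
    show "\<forall>x\<in>rc v - {v}. pc v x * cdag (x, \<sigma>) X T = 0"
    proof
      fix x assume "x \<in> rc v - {v}"
      then have "x \<in> Bl" using reach_black by auto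
      then have "(x, \<sigma>) \<notin> T" using T unfolding bfree_def by auto
      then show "pc v x * cdag (x, \<sigma>) X T = 0" unfolding cdag_def by simp
    qed
  qed auto
  then show ?thesis using pcoef_self[OF v] by simp
qed

lemma bfree_diff: "bfree B T \<Longrightarrow> bfree B (T - X)"
  unfolding bfree_def by auto

lemma eval_bfree:
  assumes "distinct vs" "set vs \<subseteq> W" "bfree Bl T"
  shows "foldr (\<lambda>v. ad v (s v)) vs vacuum T = (if T = gr s (set vs) then epsl vs else 0)"
  using assms
proof (induction vs arbitrary: T)
  case Nil then show ?case by (simp add: vacuum_def gr_def)
next
  case (Cons v vs)
  let ?m = "(v, s v)"
  let ?X = "foldr (\<lambda>v. ad v (s v)) vs vacuum"
  have v: "v \<in> W" and vn: "v \<notin> set vs" using Cons.prems by auto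
  have e: "foldr (\<lambda>v. ad v (s v)) (v # vs) vacuum T = cdag ?m ?X T"
    using adag_bfree[OF v Cons.prems(3)] by simp
  have IH: "?X (T - {?m}) = (if T - {?m} = gr s (set vs) then epsl vs else 0)"
  proof (rule Cons.IH)
    show "distinct vs" "set vs \<subseteq> W" using Cons.prems by auto
    show "bfree Bl (T - {?m})" using Cons.prems(3) by (rule bfree_diff)
  qed
  have mnot: "?m \<notin> gr s (set vs)" using vn unfolding gr_def by auto
  have grc: "gr s (set (v # vs)) = insert ?m (gr s (set vs))" unfolding gr_def by auto
  show ?case
  proof (cases "T = gr s (set (v # vs))")
    case True
    then have "?m \<in> T" "T - {?m} = gr s (set vs)" using grc mnot by auto
    then show ?thesis using e IH True fsign_gr[OF vn, of s "s v"] unfolding cdag_def by simp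
  next
    case False
    have "cdag ?m ?X T = 0"
    proof (cases "?m \<in> T")
      case True
      have "T - {?m} \<noteq> gr s (set vs)"
      proof
        assume "T - {?m} = gr s (set vs)"
        then have "T = insert ?m (gr s (set vs))" using True by blast
        then show False using False grc by simp
      qed
      then show ?thesis using IH True unfolding cdag_def by simp
    next
      case False then show ?thesis unfolding cdag_def by simp
    qed
    then show ?thesis using e False by simp
  qed
qed

lemma support_prod:
  assumes "set vs \<subseteq> W"
  shows "foldr (\<lambda>v. ad v (s v)) vs vacuum S \<noteq> 0 \<Longrightarrow> S \<subseteq> AV \<times> (s ` set vs) \<and> card S = length vs"
  using assms
proof (induction vs arbitrary: S)
  case Nil then show ?case by (simp add: vacuum_def split: if_splits)
next
  case (Cons v vs)
  let ?X = "foldr (\<lambda>v. ad v (s v)) vs vacuum"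
  have "(\<Sum>x\<in>rc v. pc v x * cdag (x, s v) ?X S) \<noteq> 0"
    using Cons.prems unfolding adag_def by simp
  then obtain x where x: "x \<in> rc v" "cdag (x, s v) ?X S \<noteq> 0"
    by (metis (mono_tags, lifting) mult_zero_right sum.neutral)
  then have xS: "(x, s v) \<in> S" and X: "?X (S - {(x, s v)}) \<noteq> 0" unfolding cdag_def
    by (auto split: if_splits)
  have IH: "S - {(x, s v)} \<subseteq> AV \<times> s ` set vs \<and> card (S - {(x, s v)}) = length vs"
    using Cons.IH[OF X] Cons.prems by auto
  have "x \<in> AV" using reach_AV[of v] x Cons.prems by auto
  then have "S \<subseteq> AV \<times> s ` set (v # vs)" using IH xS by auto
  moreover have "card S = length (v # vs)"
  proof -
    have "card S > 0" using xS by (auto simp: card_gt_0_iff)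
    moreover have "card (S - {(x, s v)}) = card S - 1" using xS by simp
    ultimately show ?thesis using IH by simp
  qed
  ultimately show ?case by simp
qed

end


lemma ip_sum_right: "ip X (\<lambda>S. \<Sum>x\<in>A. f x S) = (\<Sum>x\<in>A. ip X (f x))"
  unfolding ip_def by (simp add: sum_distrib_left sum.swap[of _ A])

lemma ip_sum_left: "ip (\<lambda>S. \<Sum>x\<in>A. f x S) Y = (\<Sum>x\<in>A. ip (f x) Y)"
  unfolding ip_def by (simp add: sum_distrib_right sum.swap[of _ A])

lemma ip_add_right: "ip X (\<lambda>S. Y S + Z S) = ip X Y + ip X Z"
  unfolding ip_def by (simp add: distrib_left sum.distrib)

lemma ip_smult_right: "ip X (\<lambda>S. c * Y S) = c * ip X Y"
  unfolding ip_def by (simp add: sum_distrib_left algebra_simps)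

lemma ip_bdag:
  fixes X :: "('v::{finite,linorder}) state"
  shows "ip X (bdag V l \<sigma> Y) = ip (bop V l \<sigma> X) Y"
proof -
  have "ip X (bdag V l \<sigma> Y) = (\<Sum>v\<in>V l. ip X (cdag (v, \<sigma>) Y))"
    unfolding bdag_def by (rule ip_sum_right)
  also have "\<dots> = (\<Sum>v\<in>V l. ip (cann (v, \<sigma>) X) Y)" by (simp add: ip_cdag)
  also have "\<dots> = ip (bop V l \<sigma> X) Y"
    unfolding bop_def by (rule ip_sum_left[symmetric])
  finally show ?thesis .
qed

lemma ip_numop2:
  fixes X :: "('v::{finite,linorder}) state"
  shows "ip X (numop (v, Up) (numop (v, Dn) X)) =
    of_real (\<Sum>S\<in>UNIV. if (v, Up) \<in> S \<and> (v, Dn) \<in> S then (cmod (X S))^2 else 0)"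
  unfolding ip_def of_real_sum numop_eq
proof (intro sum.cong refl)
  fix S
  have "cnj (X S) * X S = of_real ((cmod (X S))^2)"
    by (simp only: complex_norm_square mult.commute)
  then show "cnj (X S) * (if (v, Up) \<in> S then if (v, Dn) \<in> S then X S else 0 else 0) =
    of_real (if (v, Up) \<in> S \<and> (v, Dn) \<in> S then (cmod (X S))^2 else 0)" by auto
qed

definition Qhop :: "nat \<Rightarrow> (nat \<Rightarrow> 'v set) \<Rightarrow> ('v::{finite,linorder}) state \<Rightarrow> real" where
  "Qhop L V X = (\<Sum>l\<in>{1..L}. \<Sum>\<sigma>\<in>{Up, Dn}. \<Sum>S\<in>UNIV. (cmod (bop V l \<sigma> X S))^2)"

definition Qhub :: "'v set \<Rightarrow> ('v::{finite,linorder}) state \<Rightarrow> real" where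
  "Qhub A X = (\<Sum>v\<in>A. \<Sum>S\<in>UNIV. if (v, Up) \<in> S \<and> (v, Dn) \<in> S then (cmod (X S))^2 else 0)"

lemma ip_H:
  fixes X :: "('v::{finite,linorder}) state"
  shows "ip X (H_hub L V t U X) = of_real (t * Qhop L V X + U * Qhub (allV L V) X)"
proof -
  have h: "H_hub L V t U X = (\<lambda>S. of_real t * (\<Sum>l\<in>{1..L}. \<Sum>\<sigma>\<in>{Up, Dn}. bdag V l \<sigma> (bop V l \<sigma> X) S)
     + of_real U * (\<Sum>v\<in>allV L V. numop (v, Up) (numop (v, Dn) X) S))"
    unfolding H_hub_def H_hop_def by simp
  have "ip X (H_hub L V t U X) = of_real t * (\<Sum>l\<in>{1..L}. \<Sum>\<sigma>\<in>{Up, Dn}. ip X (bdag V l \<sigma> (bop V l \<sigma> X)))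
       + of_real U * (\<Sum>v\<in>allV L V. ip X (numop (v, Up) (numop (v, Dn) X)))"
    unfolding h ip_add_right ip_smult_right ip_sum_right by simp
  also have "\<dots> = of_real t * of_real (Qhop L V X) + of_real U * of_real (Qhub (allV L V) X)"
    unfolding ip_bdag ip_numop2 Qhop_def Qhub_def ip_self_nonneg of_real_sum by simp
  finally show ?thesis by simp
qed

lemma Qhop_nonneg: "Qhop L V X \<ge> 0"
  unfolding Qhop_def by (intro sum_nonneg) auto

lemma Qhub_nonneg: "Qhub A X \<ge> 0"
  unfolding Qhub_def by (intro sum_nonneg) auto

lemma eigen_nonneg:
  fixes X :: "('v::{finite,linorder}) state"
  assumes t: "t > 0" and U: "U > 0" and X: "X \<noteq> (\<lambda>S. 0)"
    and e: "H_hub L V t U X = (\<lambda>S. of_real E * X S)"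
  shows "E \<ge> 0"
proof -
  have "ip X (H_hub L V t U X) = of_real E * ip X X"
    unfolding e by (rule ip_smult_right)
  then have "t * Qhop L V X + U * Qhub (allV L V) X = E * (\<Sum>S\<in>UNIV. (cmod (X S))^2)"
    unfolding ip_H ip_self_nonneg by (metis of_real_eq_iff of_real_mult)
  moreover have "t * Qhop L V X + U * Qhub (allV L V) X \<ge> 0"
    by (intro add_nonneg_nonneg mult_nonneg_nonneg; simp add: Qhop_nonneg Qhub_nonneg less_imp_le t U)
  moreover have "(\<Sum>S\<in>UNIV. (cmod (X S))^2) > 0"
  proof -
    have "(\<Sum>S\<in>UNIV. (cmod (X S))^2) \<ge> 0" by (intro sum_nonneg) auto
    moreover have "(\<Sum>S\<in>UNIV. (cmod (X S))^2) \<noteq> 0" using ip_self_zero X by blast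
    ultimately show ?thesis by simp
  qed
  ultimately show ?thesis by (simp add: zero_le_mult_iff)
qed

lemma zero_energy:
  fixes X :: "('v::{finite,linorder}) state"
  assumes t: "t > 0" and U: "U > 0"
    and e: "H_hub L V t U X = (\<lambda>S. of_real 0 * X S)"
  shows "\<forall>l\<in>{1..L}. \<forall>\<sigma>. bop V l \<sigma> X = (\<lambda>S. 0)"
    and "\<forall>v\<in>allV L V. \<forall>S. (v, Up) \<in> S \<and> (v, Dn) \<in> S \<longrightarrow> X S = 0"
proof -
  have "ip X (H_hub L V t U X) = 0"
    unfolding e ip_def by simp
  then have "complex_of_real (t * Qhop L V X + U * Qhub (allV L V) X) = 0"
    by (simp only: ip_H)
  then have z: "t * Qhop L V X + U * Qhub (allV L V) X = 0"
    by (simp only: of_real_eq_0_iff)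
  have q1: "Qhop L V X = 0" and q2: "Qhub (allV L V) X = 0"
    using z t U Qhop_nonneg[of L V X] Qhub_nonneg[of "allV L V" X]
    by (smt (verit) mult_pos_pos mult_nonneg_nonneg)+
  show "\<forall>l\<in>{1..L}. \<forall>\<sigma>. bop V l \<sigma> X = (\<lambda>S. 0)"
  proof (intro ballI allI ext)
    fix l \<sigma> S assume l: "l \<in> {1..L}"
    have s\<sigma>: "\<sigma> \<in> {Up, Dn}" by (cases \<sigma>) auto
    have "(\<Sum>\<sigma>\<in>{Up, Dn}. \<Sum>S\<in>UNIV. (cmod (bop V l \<sigma> X S))^2) = 0"
      using q1 l unfolding Qhop_def
      by (subst (asm) sum_nonneg_eq_0_iff) (auto intro!: sum_nonneg add_nonneg_nonneg)
    then have "(\<Sum>S\<in>UNIV. (cmod (bop V l \<sigma> X S))^2) = 0"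
      using s\<sigma> by (subst (asm) sum_nonneg_eq_0_iff) (auto intro!: sum_nonneg)
    then have "(cmod (bop V l \<sigma> X S))^2 = 0"
      by (subst (asm) sum_nonneg_eq_0_iff) auto
    then show "bop V l \<sigma> X S = 0" by simp
  qed
  show "\<forall>v\<in>allV L V. \<forall>S. (v, Up) \<in> S \<and> (v, Dn) \<in> S \<longrightarrow> X S = 0"
  proof (intro ballI allI impI)
    fix v S assume v: "v \<in> allV L V" and S: "(v, Up) \<in> S \<and> (v, Dn) \<in> S"
    have fin: "finite (allV L V)"
    proof -
      have "finite (UNIV :: 'v set)" by simp
      then show ?thesis by (rule finite_subset[rotated]) simp
    qed
    have "(\<Sum>S\<in>UNIV. if (v, Up) \<in> S \<and> (v, Dn) \<in> S then (cmod (X S))^2 else 0) = 0"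
      using q2 v fin unfolding Qhub_def
      by (subst (asm) sum_nonneg_eq_0_iff) (auto intro!: sum_nonneg)
    then have "(if (v, Up) \<in> S \<and> (v, Dn) \<in> S then (cmod (X S))^2 else 0) = 0"
      by (subst (asm) sum_nonneg_eq_0_iff) auto
    then show "X S = 0" using S by simp
  qed
qed


lemma sum_pow2_less: "(\<Sum>k\<in>{1..<l}. (2::nat) ^ k) < 2 ^ l"
proof -
  have "(\<Sum>k<l. (2::nat) ^ k) < 2 ^ l"
    by (induction l) auto
  moreover have "(\<Sum>k\<in>{1..<l}. (2::nat) ^ k) \<le> (\<Sum>k<l. (2::nat) ^ k)"
    by (intro sum_mono2) auto
  ultimately show ?thesis by simp
qed

context cons
begin

definition Fl :: "'v set \<Rightarrow> 'v list \<Rightarrow> 'v state" where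
  "Fl D vs = foldr (\<lambda>v. ad v (sp D v)) vs vacuum"

definition Iset :: "'v mode set \<Rightarrow> (nat \<times> spin) set" where
  "Iset S = {p \<in> {1..L} \<times> UNIV. (v0 (fst p), snd p) \<in> S}"

definition mu :: "'v mode set \<Rightarrow> nat" where
  "mu S = (\<Sum>p\<in>Iset S. 2 ^ fst p)"

lemma Iset_fin: "finite (Iset S)"
  unfolding Iset_def by (rule finite_subset[of _ "{1..L} \<times> UNIV"]) auto

lemma mu_decr:
  assumes l: "l \<in> {1..L}" and m: "(v0 l, \<sigma>) \<in> S" and u: "u \<in> V l" "u \<noteq> v0 l"
  shows "mu (insert (u, \<sigma>) (S - {(v0 l, \<sigma>)})) < mu S"
proof -
  let ?S' = "insert (u, \<sigma>) (S - {(v0 l, \<sigma>)})"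
  let ?B = "(\<lambda>k. (k, \<sigma>)) ` {1..<l}"
  have sub: "Iset ?S' \<subseteq> (Iset S - {(l, \<sigma>)}) \<union> ?B"
  proof
    fix p assume p: "p \<in> Iset ?S'"
    obtain k \<tau> where pk: "p = (k, \<tau>)" by (cases p)
    have k: "k \<in> {1..L}" and kin: "(v0 k, \<tau>) \<in> ?S'" using p pk unfolding Iset_def by auto
    show "p \<in> (Iset S - {(l, \<sigma>)}) \<union> ?B"
    proof (cases "(v0 k, \<tau>) = (u, \<sigma>)")
      case True
      then have "u = v0 k" "\<tau> = \<sigma>" by auto
      moreover have "\<not> l < k" using v0_notin[OF k l] u \<open>u = v0 k\<close> by auto
      moreover have "k \<noteq> l" using u \<open>u = v0 k\<close> by auto
      ultimately show ?thesis using pk k by auto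
    next
      case False
      then have "(v0 k, \<tau>) \<in> S" "(v0 k, \<tau>) \<noteq> (v0 l, \<sigma>)" using kin by auto
      then show ?thesis using pk k unfolding Iset_def by auto
    qed
  qed
  have finB: "finite ?B" by simp
  have "mu ?S' \<le> (\<Sum>p\<in>(Iset S - {(l, \<sigma>)}) \<union> ?B. 2 ^ fst p)"
    unfolding mu_def by (rule sum_mono2) (use sub Iset_fin finB in auto)
  also have "\<dots> \<le> (\<Sum>p\<in>Iset S - {(l, \<sigma>)}. 2 ^ fst p) + (\<Sum>p\<in>?B. 2 ^ fst p)"
  proof -
    have "(\<Sum>p\<in>(Iset S - {(l, \<sigma>)}) \<union> ?B. (2::nat) ^ fst p) + (\<Sum>p\<in>(Iset S - {(l, \<sigma>)}) \<inter> ?B. 2 ^ fst p)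
      = (\<Sum>p\<in>Iset S - {(l, \<sigma>)}. 2 ^ fst p) + (\<Sum>p\<in>?B. 2 ^ fst p)"
      by (rule sum.union_inter) (use Iset_fin finB in auto)
    then show ?thesis by linarith
  qed
  also have "(\<Sum>p\<in>?B. 2 ^ fst p) = (\<Sum>k\<in>{1..<l}. (2::nat) ^ k)"
    by (subst sum.reindex) (auto simp: inj_on_def)
  also have "\<dots> < 2 ^ l" by (rule sum_pow2_less)
  finally have "mu ?S' < (\<Sum>p\<in>Iset S - {(l, \<sigma>)}. 2 ^ fst p) + 2 ^ l" by simp
  moreover have "(l, \<sigma>) \<in> Iset S" using l m unfolding Iset_def by auto
  then have "mu S = 2 ^ l + (\<Sum>p\<in>Iset S - {(l, \<sigma>)}. 2 ^ fst p)"
    unfolding mu_def using Iset_fin by (simp add: sum.remove)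
  ultimately show ?thesis by simp
qed

lemma determ:
  assumes b: "\<forall>l\<in>{1..L}. \<forall>\<sigma>. bop V l \<sigma> X = (\<lambda>S. 0)"
    and z: "\<forall>T. bfree Bl T \<longrightarrow> X T = 0"
  shows "X S = 0"
proof (induction S rule: measure_induct_rule[where f=mu])
  case (less S)
  show ?case
  proof (cases "bfree Bl S")
    case True then show ?thesis using z by simp
  next
    case False
    then obtain w \<sigma> where m: "(w, \<sigma>) \<in> S" "w \<in> Bl" unfolding bfree_def by auto
    then obtain l where l: "l \<in> {1..L}" "w = v0 l" by auto
    define T where "T = S - {(v0 l, \<sigma>)}"
    have "bop V l \<sigma> X T = 0" using b l by simp
    then have "(\<Sum>u\<in>V l. cann (u, \<sigma>) X T) = 0" unfolding bop_def by simp
    moreover have "(\<Sum>u\<in>V l. cann (u, \<sigma>) X T) = (\<Sum>u\<in>{v0 l}. cann (u, \<sigma>) X T)"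
    proof (rule sum.mono_neutral_cong_right)
      show "finite (V l)" using V_fin[OF l(1)] .
      show "{v0 l} \<subseteq> V l" using v0_in[OF l(1)] by simp
      show "\<forall>u\<in>V l - {v0 l}. cann (u, \<sigma>) X T = 0"
      proof
        fix u assume u: "u \<in> V l - {v0 l}"
        show "cann (u, \<sigma>) X T = 0"
        proof (cases "(u, \<sigma>) \<in> T")
          case True then show ?thesis unfolding cann_def by simp
        next
          case False
          have "mu (insert (u, \<sigma>) T) < mu S"
            unfolding T_def using mu_decr[OF l(1)] m l u by auto
          then have "X (insert (u, \<sigma>) T) = 0" using less by simp
          then show ?thesis unfolding cann_def by simp
        qed
      qed
    qed auto
    ultimately have "cann (v0 l, \<sigma>) X T = 0" by simp
    moreover have "insert (v0 l, \<sigma>) T = S" unfolding T_def using m l by auto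
    ultimately show ?thesis unfolding cann_def T_def by simp
  qed
qed

lemma gr_sp_inj:
  assumes "D \<subseteq> W" "D' \<subseteq> W" "gr (sp D) W = gr (sp D') W"
  shows "D = D'"
proof -
  have "\<And>v. v \<in> W \<Longrightarrow> (v \<in> D \<longleftrightarrow> (v, Dn) \<in> gr (sp D) W)"
    unfolding gr_def sp_def by (auto split: if_splits)
  moreover have "\<And>v. v \<in> W \<Longrightarrow> (v \<in> D' \<longleftrightarrow> (v, Dn) \<in> gr (sp D') W)"
    unfolding gr_def sp_def by (auto split: if_splits)
  ultimately show ?thesis using assms by blast
qed

lemma cann_diff: "cann m (\<lambda>S. X S - Y S) S = cann m X S - cann m Y S"
  unfolding cann_def by (auto simp: right_diff_distrib)

lemma bop_lin:
  "bop V l \<sigma> (\<lambda>S. \<Sum>x\<in>A. k x * f x S) S = (\<Sum>x\<in>A. k x * bop V l \<sigma> (f x) S)"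
  unfolding bop_def by (simp add: cann_lin sum_distrib_left sum.swap[of _ A])

lemma bop_diff:
  "bop V l \<sigma> (\<lambda>S. X S - Y S) S = bop V l \<sigma> X S - bop V l \<sigma> Y S"
  unfolding bop_def cann_diff by (rule sum_subtractf)

lemma bfree_config:
  assumes sec: "\<Psi> \<in> sector AV (card W)"
    and dbl: "\<forall>v\<in>AV. \<forall>S. (v, Up) \<in> S \<and> (v, Dn) \<in> S \<longrightarrow> \<Psi> S = 0"
    and T: "bfree Bl T" and nz: "\<Psi> T \<noteq> 0"
  shows "\<exists>D0\<subseteq>W. T = gr (sp D0) W"
proof -
  have TA: "T \<subseteq> AV \<times> UNIV" and cT: "card T = card W"
    using sec nz unfolding sector_def by auto
  have fW: "fst ` T \<subseteq> W"
  proof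
    fix v assume "v \<in> fst ` T"
    then obtain a where a: "(v, a) \<in> T" by auto
    then have "v \<in> AV" "v \<notin> Bl" using TA T unfolding bfree_def by auto
    then show "v \<in> W" by (rule AV_split)
  qed
  have uniq: "\<And>v a b. (v, a) \<in> T \<Longrightarrow> (v, b) \<in> T \<Longrightarrow> a = b"
  proof -
    fix v a b assume ab: "(v, a) \<in> T" "(v, b) \<in> T"
    show "a = b"
    proof (rule ccontr)
      assume "a \<noteq> b"
      then have "(v, Up) \<in> T \<and> (v, Dn) \<in> T" using ab by (cases a; cases b) auto
      moreover have "v \<in> AV" using ab TA by auto
      ultimately show False using dbl nz by auto
    qed
  qed
  have inj: "inj_on fst T" unfolding inj_on_def using uniq by auto
  have "card (fst ` T) = card W" using card_image[OF inj] cT by simp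
  then have fTW: "fst ` T = W" using fW W_fin by (simp add: card_subset_eq)
  define D0 where "D0 = {v \<in> W. (v, Dn) \<in> T}"
  have "T = gr (sp D0) W"
  proof
    show "T \<subseteq> gr (sp D0) W"
    proof
      fix m assume m: "m \<in> T"
      obtain v a where va: "m = (v, a)" by (cases m)
      have vW: "v \<in> W" using fW m va by auto
      have "a = sp D0 v"
      proof (cases a)
        case Up
        then have "(v, Dn) \<notin> T" using uniq m va by blast
        then show ?thesis using Up unfolding sp_def D0_def by auto
      next
        case Dn
        then show ?thesis using m va vW unfolding sp_def D0_def by auto
      qed
      then show "m \<in> gr (sp D0) W" using va vW unfolding gr_def by auto
    qed
    show "gr (sp D0) W \<subseteq> T"
    proof
      fix m assume "m \<in> gr (sp D0) W"
      then obtain v where v: "v \<in> W" "m = (v, sp D0 v)" unfolding gr_def by auto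
      then obtain a where a: "(v, a) \<in> T" using fTW by force
      have "a = sp D0 v"
      proof (cases a)
        case Up
        then have "(v, Dn) \<notin> T" using uniq a by blast
        then show ?thesis using Up unfolding sp_def D0_def by auto
      next
        case Dn
        then show ?thesis using a v unfolding sp_def D0_def by auto
      qed
      then show "m \<in> T" using a v by simp
    qed
  qed
  moreover have "D0 \<subseteq> W" unfolding D0_def by auto
  ultimately show ?thesis by blast
qed

lemma represent:
  assumes sec: "\<Psi> \<in> sector AV (card W)"
    and b: "\<forall>l\<in>{1..L}. \<forall>\<sigma>. bop V l \<sigma> \<Psi> = (\<lambda>S. 0)"
    and dbl: "\<forall>v\<in>AV. \<forall>S. (v, Up) \<in> S \<and> (v, Dn) \<in> S \<longrightarrow> \<Psi> S = 0"
    and \<pi>: "distinct \<pi>" "set \<pi> = W"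
  shows "\<Psi> = (\<lambda>S. \<Sum>D\<in>Pow W. (\<Psi> (gr (sp D) W) / epsl \<pi>) * Fl D \<pi> S)"
proof -
  define Y where "Y = (\<lambda>S. \<Sum>D\<in>Pow W. (\<Psi> (gr (sp D) W) / epsl \<pi>) * Fl D \<pi> S)"
  define X where "X = (\<lambda>S. \<Psi> S - Y S)"
  have bX: "\<forall>l\<in>{1..L}. \<forall>\<sigma>. bop V l \<sigma> X = (\<lambda>S. 0)"
  proof (intro ballI allI ext)
    fix l \<sigma> S assume l: "l \<in> {1..L}"
    have z: "\<And>D. bop V l \<sigma> (Fl D \<pi>) S = 0"
      unfolding Fl_def using bop_prod[of \<pi> l \<sigma>] l \<pi> by simp
    have "bop V l \<sigma> Y S = 0"
      unfolding Y_def bop_lin z by simp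
    then show "bop V l \<sigma> X S = 0" unfolding X_def bop_diff using b l by simp
  qed
  have zX: "\<forall>T. bfree Bl T \<longrightarrow> X T = 0"
  proof (intro allI impI)
    fix T assume T: "bfree Bl T"
    have ev: "\<And>D. Fl D \<pi> T = (if T = gr (sp D) W then epsl \<pi> else 0)"
      unfolding Fl_def using eval_bfree[OF \<pi>(1) _ T] \<pi>(2) by simp
    show "X T = 0"
    proof (cases "\<exists>D0\<subseteq>W. T = gr (sp D0) W")
      case True
      then obtain D0 where D0: "D0 \<subseteq> W" "T = gr (sp D0) W" by auto
      have "Y T = (\<Sum>D\<in>{D0}. (\<Psi> (gr (sp D) W) / epsl \<pi>) * Fl D \<pi> T)"
        unfolding Y_def
      proof (rule sum.mono_neutral_cong_right)
        show "\<forall>D\<in>Pow W - {D0}. \<Psi> (gr (sp D) W) / epsl \<pi> * Fl D \<pi> T = 0"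
        proof
          fix D assume D: "D \<in> Pow W - {D0}"
          have "T \<noteq> gr (sp D) W"
          proof
            assume "T = gr (sp D) W"
            then have "D = D0" using gr_sp_inj[of D D0] D D0 by simp
            then show False using D by simp
          qed
          then show "\<Psi> (gr (sp D) W) / epsl \<pi> * Fl D \<pi> T = 0" using ev[of D] by simp
        qed
      qed (use D0 W_fin in auto)
      also have "\<dots> = \<Psi> T" using ev D0 epsl_nz[of \<pi>] by simp
      finally show ?thesis unfolding X_def by simp
    next
      case False
      then have "\<Psi> T = 0" using bfree_config[OF sec dbl T] by blast
      moreover have "Y T = 0" unfolding Y_def using ev False by (intro sum.neutral) auto
      ultimately show ?thesis unfolding X_def by simp
    qed
  qed
  have "\<Psi> = Y"
  proof (rule ext)
    fix S have "X S = 0" using determ[OF bX zX] .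
    then show "\<Psi> S = Y S" unfolding X_def by simp
  qed
  then show ?thesis unfolding Y_def .
qed

end


lemma gr_sp_eq: "gr (sp D) A = gr (sp D') A \<longleftrightarrow> D \<inter> A = D' \<inter> A"
proof
  assume a: "gr (sp D) A = gr (sp D') A"
  have "\<And>v. v \<in> A \<Longrightarrow> (v \<in> D \<longleftrightarrow> (v, Dn) \<in> gr (sp D) A)"
    unfolding gr_def sp_def by (auto split: if_splits)
  moreover have "\<And>v. v \<in> A \<Longrightarrow> (v \<in> D' \<longleftrightarrow> (v, Dn) \<in> gr (sp D') A)"
    unfolding gr_def sp_def by (auto split: if_splits)
  ultimately show "D \<inter> A = D' \<inter> A" using a by blast
next
  assume "D \<inter> A = D' \<inter> A"
  then have "\<And>v. v \<in> A \<Longrightarrow> sp D v = sp D' v"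
  proof -
    fix v assume a: "D \<inter> A = D' \<inter> A" and v: "v \<in> A"
    then have "v \<in> D \<longleftrightarrow> v \<in> D'" by blast
    then show "sp D v = sp D' v" unfolding sp_def by simp
  qed
  then show "gr (sp D) A = gr (sp D') A" unfolding gr_def by (auto simp: image_def)
qed

context cons
begin

lemma c_adag_T:
  assumes x: "x \<in> W" and T: "bfree Bl T" and xa: "(x, a) \<notin> T"
  shows "cann (u, \<sigma>) (ad x a Z) T = (if \<sigma> = a then pc x u else 0) * Z T"
proof -
  have "ad x a (cann (u, \<sigma>) Z) T = 0"
    using adag_bfree[OF x T] xa unfolding cdag_def by simp
  then show ?thesis using cann_adag[OF x, of u \<sigma> a Z T] by simp
qed

lemma cc_adag:
  assumes x: "x \<in> W" and T: "bfree Bl T" and xa: "\<forall>\<sigma>. (x, \<sigma>) \<notin> T"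
  shows "cann (u, Dn) (cann (u, Up) (ad x a Z)) T
    = (if a = Up then pc x u else 0) * cann (u, Dn) Z T - (if a = Dn then pc x u else 0) * cann (u, Up) Z T"
proof -
  have e: "cann (u, Up) (ad x a Z) = (\<lambda>S. (if Up = a then pc x u else 0) * Z S - ad x a (cann (u, Up) Z) S)"
    using cann_adag[OF x] by (intro ext) simp
  have "cann (u, Dn) (cann (u, Up) (ad x a Z)) T
     = (if Up = a then pc x u else 0) * cann (u, Dn) Z T - cann (u, Dn) (ad x a (cann (u, Up) Z)) T"
    unfolding e cann_diff cann_smult ..
  also have "cann (u, Dn) (ad x a (cann (u, Up) Z)) T = (if Dn = a then pc x u else 0) * cann (u, Up) Z T"
    using c_adag_T[OF x T] xa by simp
  finally show ?thesis by (auto simp: eq_commute)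
qed

lemma swap_step:
  assumes sec: "\<Psi> \<in> sector AV (card W)"
    and b: "\<forall>l\<in>{1..L}. \<forall>\<sigma>. bop V l \<sigma> \<Psi> = (\<lambda>S. 0)"
    and dbl: "\<forall>v\<in>AV. \<forall>S. (v, Up) \<in> S \<and> (v, Dn) \<in> S \<longrightarrow> \<Psi> S = 0"
    and ww: "w \<in> W" "w' \<in> W" "w \<noteq> w'"
    and u: "u \<in> AV" "pc w u \<noteq> 0" "pc w' u \<noteq> 0"
    and D0: "D0 \<subseteq> W - {w, w'}"
  shows "\<Psi> (gr (sp (insert w' D0)) W) = \<Psi> (gr (sp (insert w D0)) W)"
proof -
  define rest where "rest = sorted_list_of_set (W - {w, w'})"
  define \<pi> where "\<pi> = w # w' # rest"
  have rest: "distinct rest" "set rest = W - {w, w'}" unfolding rest_def using W_fin by auto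
  have \<pi>: "distinct \<pi>" "set \<pi> = W" unfolding \<pi>_def using rest ww by auto
  define c where "c D = \<Psi> (gr (sp D) W) / epsl \<pi>" for D
  have rep: "\<Psi> = (\<lambda>S. \<Sum>D\<in>Pow W. c D * Fl D \<pi> S)"
    unfolding c_def using represent[OF sec b dbl \<pi>] .
  define T0 where "T0 = gr (sp D0) (W - {w, w'})"
  have T0: "bfree Bl T0" unfolding T0_def bfree_def gr_def using white_not_black by auto
  have wT: "\<forall>\<sigma>. (w, \<sigma>) \<notin> T0" "\<forall>\<sigma>. (w', \<sigma>) \<notin> T0" unfolding T0_def gr_def by auto
  define K where "K = cann (u, Dn) (cann (u, Up) \<Psi>)"
  have K0: "K T0 = 0"
  proof -
    have "\<Psi> (insert (u, Up) (insert (u, Dn) T0)) = 0" using dbl u(1) by auto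
    then show ?thesis unfolding K_def cann_def by auto
  qed
  have e1: "cann (u, Up) \<Psi> = (\<lambda>S. \<Sum>D\<in>Pow W. c D * cann (u, Up) (Fl D \<pi>) S)"
    by (subst rep) (intro ext cann_lin)
  have K1: "K T0 = (\<Sum>D\<in>Pow W. c D * cann (u, Dn) (cann (u, Up) (Fl D \<pi>)) T0)"
    unfolding K_def e1 by (rule cann_lin)
  define lam where "lam = pc w u * pc w' u * epsl rest"
  define D1 where "D1 = insert w' D0"
  define D2 where "D2 = insert w D0"
  have D12: "D1 \<noteq> D2" "D1 \<in> Pow W" "D2 \<in> Pow W" unfolding D1_def D2_def using D0 ww by auto
  have G: "cann (u, Dn) (cann (u, Up) (Fl D \<pi>)) T0
      = (if D = D1 then lam else 0) - (if D = D2 then lam else 0)" if D: "D \<subseteq> W" for D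
  proof -
    define R where "R = foldr (\<lambda>v. ad v (sp D v)) rest vacuum"
    have F: "Fl D \<pi> = ad w (sp D w) (ad w' (sp D w') R)" unfolding Fl_def \<pi>_def R_def by simp
    have RT: "R T0 = (if D \<inter> (W - {w, w'}) = D0 then epsl rest else 0)"
    proof -
      have "R T0 = (if T0 = gr (sp D) (W - {w, w'}) then epsl rest else 0)"
        unfolding R_def using eval_bfree[OF rest(1) _ T0] rest(2) by simp
      moreover have "T0 = gr (sp D) (W - {w, w'}) \<longleftrightarrow> D \<inter> (W - {w, w'}) = D0"
        unfolding T0_def gr_sp_eq using D0 by auto
      ultimately show ?thesis by simp
    qed
    have c2: "cann (u, \<sigma>) (ad w' (sp D w') R) T0 = (if \<sigma> = sp D w' then pc w' u else 0) * R T0" for \<sigma>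
      using c_adag_T[OF ww(2) T0] wT(2) by simp
    have val: "cann (u, Dn) (cann (u, Up) (Fl D \<pi>)) T0 =
        (if sp D w = Up then pc w u else 0) * ((if Dn = sp D w' then pc w' u else 0) * R T0)
      - (if sp D w = Dn then pc w u else 0) * ((if Up = sp D w' then pc w' u else 0) * R T0)"
      unfolding F cc_adag[OF ww(1) T0 wT(1)] c2 ..
    have eq1: "D = D1 \<longleftrightarrow> w \<notin> D \<and> w' \<in> D \<and> D \<inter> (W - {w, w'}) = D0"
      unfolding D1_def using D D0 ww by auto
    have eq2: "D = D2 \<longleftrightarrow> w \<in> D \<and> w' \<notin> D \<and> D \<inter> (W - {w, w'}) = D0"
      unfolding D2_def using D D0 ww by auto
    show ?thesis unfolding val RT lam_def eq1 eq2 sp_def by auto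
  qed
  have "K T0 = (\<Sum>D\<in>Pow W. c D * ((if D = D1 then lam else 0) - (if D = D2 then lam else 0)))"
    unfolding K1 using G by (intro sum.cong) auto
  also have "\<dots> = (\<Sum>D\<in>Pow W. (if D = D1 then c D * lam else 0)) - (\<Sum>D\<in>Pow W. (if D = D2 then c D * lam else 0))"
    by (simp only: sum_subtractf[symmetric]) (intro sum.cong refl; auto)
  also have "\<dots> = c D1 * lam - c D2 * lam"
    using sum.delta[of "Pow W" D1 "\<lambda>D. c D * lam"] sum.delta[of "Pow W" D2 "\<lambda>D. c D * lam"] D12 W_fin
    by simp
  finally have "c D1 * lam = c D2 * lam" using K0 by simp
  moreover have "lam \<noteq> 0" unfolding lam_def using u epsl_nz by simp
  ultimately have "c D1 = c D2" by simp
  then show ?thesis unfolding c_def D1_def D2_def using epsl_nz[of \<pi>] by simp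
qed

end


context cons
begin

lemma anticomm_aop:
  "anticomm (cdag (u, \<sigma>)) (aop L V v0 v \<sigma>) \<Psi> S = pc v u * \<Psi> S"
proof -
  have a: "cdag (u, \<sigma>) (aop L V v0 v \<sigma> \<Psi>) S = (\<Sum>x\<in>rc v. pc v x * cdag (u, \<sigma>) (cann (x, \<sigma>) \<Psi>) S)"
    unfolding aop_def by (rule cdag_lin)
  have b: "aop L V v0 v \<sigma> (cdag (u, \<sigma>) \<Psi>) S = (\<Sum>x\<in>rc v. pc v x * cann (x, \<sigma>) (cdag (u, \<sigma>) \<Psi>) S)"
    unfolding aop_def by simp
  have "anticomm (cdag (u, \<sigma>)) (aop L V v0 v \<sigma>) \<Psi> S
      = (\<Sum>x\<in>rc v. pc v x * (cann (x, \<sigma>) (cdag (u, \<sigma>) \<Psi>) S + cdag (u, \<sigma>) (cann (x, \<sigma>) \<Psi>) S))"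
    unfolding anticomm_def a b by (simp only: sum.distrib[symmetric] distrib_left add.commute)
  also have "\<dots> = (\<Sum>x\<in>rc v. pc v x * (if x = u then \<Psi> S else 0))"
  proof (intro sum.cong refl)
    fix x show "pc v x * (cann (x, \<sigma>) (cdag (u, \<sigma>) \<Psi>) S + cdag (u, \<sigma>) (cann (x, \<sigma>) \<Psi>) S)
      = pc v x * (if x = u then \<Psi> S else 0)"
      using car_same[of "(x,\<sigma>)" \<Psi> S] car_diff[of "(x,\<sigma>)" "(u,\<sigma>)" \<Psi> S] by auto
  qed
  also have "\<dots> = pc v u * \<Psi> S"
  proof (cases "u \<in> rc v")
    case True
    then have "(\<Sum>x\<in>rc v. pc v x * (if x = u then \<Psi> S else 0)) = (\<Sum>x\<in>{u}. pc v x * \<Psi> S)"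
      by (intro sum.mono_neutral_cong_right) auto
    then show ?thesis by simp
  next
    case False
    then show ?thesis using pcoef_out[OF False] by (simp add: sum.neutral)
  qed
  finally show ?thesis .
qed

lemma dc_pcoef:
  assumes "directly_connected L V v0 \<sigma> v v'"
  shows "\<exists>u\<in>AV. pc v u \<noteq> 0 \<and> pc v' u \<noteq> 0"
proof -
  obtain u where u: "u \<in> AV" "anticomm (cdag (u, \<sigma>)) (aop L V v0 v \<sigma>) \<noteq> zero_op"
    "anticomm (cdag (u, \<sigma>)) (aop L V v0 v' \<sigma>) \<noteq> zero_op"
    using assms unfolding directly_connected_def by auto
  have "pc v u \<noteq> 0"
  proof
    assume "pc v u = 0"
    then have "anticomm (cdag (u, \<sigma>)) (aop L V v0 v \<sigma>) = zero_op"
      unfolding zero_op_def by (intro ext) (simp add: anticomm_aop)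
    then show False using u by simp
  qed
  moreover have "pc v' u \<noteq> 0"
  proof
    assume "pc v' u = 0"
    then have "anticomm (cdag (u, \<sigma>)) (aop L V v0 v' \<sigma>) = zero_op"
      unfolding zero_op_def by (intro ext) (simp add: anticomm_aop)
    then show False using u by simp
  qed
  ultimately show ?thesis using u by auto
qed

definition Rel where "Rel x y \<longleftrightarrow> x \<in> W \<and> y \<in> W \<and> directly_connected L V v0 Up x y"

lemma Rel_W: "Rel\<^sup>*\<^sup>* z y \<Longrightarrow> z \<in> W \<Longrightarrow> y \<in> W"
  by (induction rule: rtranclp_induct) (auto simp: Rel_def)

lemma edge_swap:
  assumes sec: "\<Psi> \<in> sector AV (card W)"
    and b: "\<forall>l\<in>{1..L}. \<forall>\<sigma>. bop V l \<sigma> \<Psi> = (\<lambda>S. 0)"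
    and dbl: "\<forall>v\<in>AV. \<forall>S. (v, Up) \<in> S \<and> (v, Dn) \<in> S \<longrightarrow> \<Psi> S = 0"
    and r: "Rel x z" and D: "D \<subseteq> W" "x \<in> D" "z \<notin> D"
  shows "\<Psi> (gr (sp D) W) = \<Psi> (gr (sp (insert z (D - {x}))) W)"
proof -
  have xz: "x \<in> W" "z \<in> W" "x \<noteq> z" using r D unfolding Rel_def by auto
  obtain u where u: "u \<in> AV" "pc x u \<noteq> 0" "pc z u \<noteq> 0"
    using dc_pcoef r unfolding Rel_def by blast
  have D0: "D - {x} \<subseteq> W - {x, z}" using D by auto
  have "\<Psi> (gr (sp (insert z (D - {x}))) W) = \<Psi> (gr (sp (insert x (D - {x}))) W)"
    using swap_step[OF sec b dbl xz u D0] .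
  moreover have "insert x (D - {x}) = D" using D by auto
  ultimately show ?thesis by simp
qed

lemma slide:
  assumes sec: "\<Psi> \<in> sector AV (card W)"
    and b: "\<forall>l\<in>{1..L}. \<forall>\<sigma>. bop V l \<sigma> \<Psi> = (\<lambda>S. 0)"
    and dbl: "\<forall>v\<in>AV. \<forall>S. (v, Up) \<in> S \<and> (v, Dn) \<in> S \<longrightarrow> \<Psi> S = 0"
    and r: "Rel\<^sup>*\<^sup>* x y"
  shows "\<forall>D. D \<subseteq> W \<longrightarrow> x \<in> D \<longrightarrow> y \<notin> D \<longrightarrow> \<Psi> (gr (sp D) W) = \<Psi> (gr (sp (insert y (D - {x}))) W)"
  using r
proof (induction rule: converse_rtranclp_induct)
  case base then show ?case by auto
next
  case (step x z)
  show ?case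
  proof (intro allI impI)
    fix D assume D: "D \<subseteq> W" "x \<in> D" "y \<notin> D"
    have zW: "z \<in> W" and xW: "x \<in> W" using step.hyps(1) unfolding Rel_def by auto
    show "\<Psi> (gr (sp D) W) = \<Psi> (gr (sp (insert y (D - {x}))) W)"
    proof (cases "z = x")
      case True then show ?thesis using step.IH[rule_format, of D] D by simp
    next
      case zx: False
      show ?thesis
      proof (cases "z \<in> D")
        case False
        define D1 where "D1 = insert z (D - {x})"
        have "\<Psi> (gr (sp D) W) = \<Psi> (gr (sp D1) W)"
          unfolding D1_def using edge_swap[OF sec b dbl step.hyps(1) D(1,2) False] .
        also have "\<dots> = \<Psi> (gr (sp (insert y (D1 - {z}))) W)"
        proof (cases "z = y")
          case True
          then have "insert y (D1 - {z}) = D1" unfolding D1_def using D by auto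
          then show ?thesis by simp
        next
          case False
          have "D1 \<subseteq> W" "z \<in> D1" "y \<notin> D1" unfolding D1_def using D zW False by auto
          then show ?thesis using step.IH[rule_format, of D1] by simp
        qed
        also have "D1 - {z} = D - {x}" unfolding D1_def using \<open>z \<notin> D\<close> by auto
        finally show ?thesis .
      next
        case True
        have yz: "y \<noteq> z" using True D by auto
        define D' where "D' = insert y (D - {z})"
        have "\<Psi> (gr (sp D) W) = \<Psi> (gr (sp D') W)"
          unfolding D'_def using step.IH[rule_format, OF D(1) True D(3)] by simp
        also have "\<dots> = \<Psi> (gr (sp (insert z (D' - {x}))) W)"
        proof (rule edge_swap[OF sec b dbl step.hyps(1)])
          show "D' \<subseteq> W" unfolding D'_def using D Rel_W[OF step.hyps(2) zW] by auto
          show "x \<in> D'" unfolding D'_def using D zx by auto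
          show "z \<notin> D'" unfolding D'_def using yz by auto
        qed
        also have "insert z (D' - {x}) = insert y (D - {x})"
          unfolding D'_def using True zx D by auto
        finally show ?thesis .
      qed
    qed
  qed
qed

end


lemma root_sum:
  fixes N m :: nat
  assumes N: "N \<ge> 1"
  defines "\<omega> \<equiv> exp (2 * of_real pi * \<i> / of_nat N)"
  shows "(\<Sum>j<N. (\<omega> ^ m) ^ j) = (if N dvd m then of_nat N else 0)"
proof -
  have wm: "\<omega> ^ m = exp (2 * of_real pi * \<i> * of_nat m / of_nat N)"
  proof -
    have "\<omega> ^ m = exp (of_nat m * (2 * of_real pi * \<i> / of_nat N))"
      unfolding \<omega>_def by (rule exp_of_nat_mult[symmetric])
    also have "of_nat m * (2 * of_real pi * \<i> / of_nat N) = 2 * of_real pi * \<i> * of_nat m / (of_nat N :: complex)"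
      by (simp add: field_simps)
    finally show ?thesis .
  qed
  show ?thesis
  proof (cases "N dvd m")
    case True
    then have "\<omega> ^ m = 1" unfolding wm using complex_root_unity_eq_1[OF N] by simp
    then show ?thesis using True by simp
  next
    case False
    then have ne: "\<omega> ^ m \<noteq> 1" unfolding wm using complex_root_unity_eq_1[OF N] by simp
    have "(\<omega> ^ m) ^ N = (\<omega> ^ N) ^ m" by (simp add: power_mult[symmetric] mult.commute)
    moreover have "\<omega> ^ N = 1"
    proof -
      have "\<omega> ^ N = exp (2 * of_real pi * \<i> * of_nat N / of_nat N)"
      proof -
        have "\<omega> ^ N = exp (of_nat N * (2 * of_real pi * \<i> / of_nat N))"
          unfolding \<omega>_def by (rule exp_of_nat_mult[symmetric])
        also have "of_nat N * (2 * of_real pi * \<i> / of_nat N) = 2 * of_real pi * \<i> * of_nat N / (of_nat N :: complex)"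
          by (simp add: field_simps)
        finally show ?thesis .
      qed
      then show ?thesis using complex_root_unity_eq_1[OF N, of N] by simp
    qed
    ultimately have "(\<omega> ^ m) ^ N = 1" by simp
    then show ?thesis using geometric_sum[OF ne, of N] False by simp
  qed
qed

lemma cspan_sum:
  assumes "finite J" "\<forall>j\<in>J. h j \<in> X"
  shows "(\<lambda>S. \<Sum>j\<in>J. c j * h j S) \<in> cspan X"
proof -
  define coef where "coef x = (\<Sum>j\<in>{j\<in>J. h j = x}. c j)" for x
  have "(\<lambda>S. \<Sum>j\<in>J. c j * h j S) = (\<lambda>S. \<Sum>x\<in>h ` J. coef x * x S)"
  proof (rule ext)
    fix S
    have "(\<Sum>j\<in>J. c j * h j S) = (\<Sum>x\<in>h ` J. \<Sum>j\<in>{j\<in>J. h j = x}. c j * h j S)"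
      by (rule sum.image_gen) (rule assms(1))
    also have "\<dots> = (\<Sum>x\<in>h ` J. coef x * x S)"
      unfolding coef_def by (intro sum.cong refl) (simp add: sum_distrib_right)
    finally show "(\<Sum>j\<in>J. c j * h j S) = (\<Sum>x\<in>h ` J. coef x * x S)" .
  qed
  moreover have "finite (h ` J)" "h ` J \<subseteq> X" using assms by auto
  ultimately show ?thesis unfolding cspan_def by blast
qed

lemma cspan_mono: "X \<subseteq> Y \<Longrightarrow> \<Psi> \<in> cspan X \<Longrightarrow> \<Psi> \<in> cspan Y"
  unfolding cspan_def by blast

context cons
begin

lemma Fl_cong: "(\<forall>x\<in>set vs. sp D x = sp D' x) \<Longrightarrow> Fl D vs = Fl D' vs"
  unfolding Fl_def by (induction vs) auto

lemma Fl_Cons: "Fl D (v # vs) = ad v (sp D v) (Fl D vs)"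
  unfolding Fl_def by simp

lemma rot_expand:
  assumes "distinct vs"
  shows "foldr (adag_rot L V v0 \<alpha> \<beta>) vs vacuum
       = (\<lambda>S. \<Sum>D\<in>Pow (set vs). \<alpha> ^ card (set vs - D) * \<beta> ^ card D * Fl D vs S)"
  using assms
proof (induction vs)
  case Nil
  show ?case unfolding Fl_def by simp
next
  case (Cons v vs)
  let ?A = "set vs"
  let ?k = "\<lambda>D. \<alpha> ^ card (?A - D) * \<beta> ^ card D"
  have v: "v \<notin> ?A" and d: "distinct vs" using Cons.prems by auto
  have IH: "foldr (adag_rot L V v0 \<alpha> \<beta>) vs vacuum = (\<lambda>S. \<Sum>D\<in>Pow ?A. ?k D * Fl D vs S)"
    using Cons.IH[OF d] .
  show ?case
  proof (rule ext)
    fix S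
    have "foldr (adag_rot L V v0 \<alpha> \<beta>) (v # vs) vacuum S
        = \<alpha> * ad v Up (\<lambda>S. \<Sum>D\<in>Pow ?A. ?k D * Fl D vs S) S + \<beta> * ad v Dn (\<lambda>S. \<Sum>D\<in>Pow ?A. ?k D * Fl D vs S) S"
      by (simp add: IH adag_rot_def)
    also have "\<dots> = (\<Sum>D\<in>Pow ?A. \<alpha> * ?k D * ad v Up (Fl D vs) S) + (\<Sum>D\<in>Pow ?A. \<beta> * ?k D * ad v Dn (Fl D vs) S)"
      unfolding adag_lin by (simp add: sum_distrib_left mult.assoc)
    also have "(\<Sum>D\<in>Pow ?A. \<alpha> * ?k D * ad v Up (Fl D vs) S)
        = (\<Sum>D\<in>Pow ?A. \<alpha> ^ card (insert v ?A - D) * \<beta> ^ card D * Fl D (v # vs) S)"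
    proof (intro sum.cong refl)
      fix D assume D: "D \<in> Pow ?A"
      have "v \<notin> D" using D v by auto
      then have "insert v ?A - D = insert v (?A - D)" by auto
      moreover have "finite (?A - D)" by simp
      moreover have "v \<notin> ?A - D" using v by simp
      ultimately have c: "card (insert v ?A - D) = Suc (card (?A - D))" by simp
      have "Fl D (v # vs) = ad v Up (Fl D vs)" using \<open>v \<notin> D\<close> unfolding Fl_Cons sp_def by simp
      then show "\<alpha> * ?k D * ad v Up (Fl D vs) S = \<alpha> ^ card (insert v ?A - D) * \<beta> ^ card D * Fl D (v # vs) S"
        using c by simp
    qed
    also have "(\<Sum>D\<in>Pow ?A. \<beta> * ?k D * ad v Dn (Fl D vs) S)
        = (\<Sum>D\<in>insert v ` Pow ?A. \<alpha> ^ card (insert v ?A - D) * \<beta> ^ card D * Fl D (v # vs) S)"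
    proof -
      have inj: "inj_on (insert v) (Pow ?A)"
        unfolding inj_on_def
      proof (intro ballI impI)
        fix x y assume x: "x \<in> Pow ?A" and y: "y \<in> Pow ?A" and e: "insert v x = insert v y"
        have "v \<notin> x" "v \<notin> y" using x y v by auto
        then have "x = insert v x - {v}" "y = insert v y - {v}" by auto
        then show "x = y" using e by simp
      qed
      have "(\<Sum>D\<in>insert v ` Pow ?A. \<alpha> ^ card (insert v ?A - D) * \<beta> ^ card D * Fl D (v # vs) S)
          = (\<Sum>D\<in>Pow ?A. \<alpha> ^ card (insert v ?A - insert v D) * \<beta> ^ card (insert v D) * Fl (insert v D) (v # vs) S)"
        by (rule sum.reindex[OF inj, unfolded comp_def])
      also have "\<dots> = (\<Sum>D\<in>Pow ?A. \<beta> * ?k D * ad v Dn (Fl D vs) S)"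
      proof (intro sum.cong refl)
        fix D assume D: "D \<in> Pow ?A"
        have "v \<notin> D" using D v by auto
        have c1: "insert v ?A - insert v D = ?A - D" using v by auto
        have c2: "card (insert v D) = Suc (card D)" using \<open>v \<notin> D\<close> D finite_subset[of D ?A] by auto
        have "Fl (insert v D) vs = Fl D vs" by (rule Fl_cong) (use v in \<open>auto simp: sp_def\<close>)
        then have "Fl (insert v D) (v # vs) = ad v Dn (Fl D vs)" unfolding Fl_Cons sp_def by simp
        then show "\<alpha> ^ card (insert v ?A - insert v D) * \<beta> ^ card (insert v D) * Fl (insert v D) (v # vs) S
            = \<beta> * ?k D * ad v Dn (Fl D vs) S"
          using c1 c2 by (simp add: mult_ac)
      qed
      finally show ?thesis by simp
    qed
    also have "(\<Sum>D\<in>Pow ?A. \<alpha> ^ card (insert v ?A - D) * \<beta> ^ card D * Fl D (v # vs) S)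
        + (\<Sum>D\<in>insert v ` Pow ?A. \<alpha> ^ card (insert v ?A - D) * \<beta> ^ card D * Fl D (v # vs) S)
        = (\<Sum>D\<in>Pow ?A \<union> insert v ` Pow ?A. \<alpha> ^ card (insert v ?A - D) * \<beta> ^ card D * Fl D (v # vs) S)"
      by (rule sum.union_disjoint[symmetric]) (use v in auto)
    also have "Pow ?A \<union> insert v ` Pow ?A = Pow (set (v # vs))"
      by (simp add: Pow_insert)
    finally show "foldr (adag_rot L V v0 \<alpha> \<beta>) (v # vs) vacuum S
       = (\<Sum>D\<in>Pow (set (v # vs)). \<alpha> ^ card (set (v # vs) - D) * \<beta> ^ card D * Fl D (v # vs) S)"
      by simp
  qed
qed

end


lemma dvd_window:
  fixes N k d :: nat
  assumes "k < N" "d < N"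
  shows "N dvd (N - k + d) \<longleftrightarrow> k = d"
proof
  assume dv: "N dvd (N - k + d)"
  show "k = d"
  proof (rule ccontr)
    assume kd: "k \<noteq> d"
    show False
    proof (cases "d < k")
      case True
      then have "0 < N - k + d" "N - k + d < N" using assms by auto
      then show False using dv by (auto dest: nat_dvd_not_less)
    next
      case False
      then have dk: "k < d" using kd by simp
      then have e: "N - k + d = N + (d - k)" using assms by simp
      then have "N dvd (d - k)" using dv by (simp add: dvd_add_right_iff)
      moreover have "0 < d - k" "d - k < N" using dk assms by auto
      ultimately show False by (auto dest: nat_dvd_not_less)
    qed
  qed
next
  assume "k = d" then show "N dvd (N - k + d)" using assms by simp
qed

context cons
begin

lemma card_eq:
  assumes sec: "\<Psi> \<in> sector AV (card W)"
    and b: "\<forall>l\<in>{1..L}. \<forall>\<sigma>. bop V l \<sigma> \<Psi> = (\<lambda>S. 0)"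
    and dbl: "\<forall>v\<in>AV. \<forall>S. (v, Up) \<in> S \<and> (v, Dn) \<in> S \<longrightarrow> \<Psi> S = 0"
    and conn: "\<forall>v\<in>W. \<forall>v'\<in>W. Rel\<^sup>*\<^sup>* v v'"
  shows "D \<subseteq> W \<Longrightarrow> D' \<subseteq> W \<Longrightarrow> card D = card D' \<Longrightarrow> \<Psi> (gr (sp D) W) = \<Psi> (gr (sp D') W)"
proof (induction "card (D - D')" arbitrary: D rule: less_induct)
  case less
  have finD: "finite D" "finite D'" using less.prems W_fin finite_subset by auto
  show ?case
  proof (cases "D - D' = {}")
    case True
    then have "D \<subseteq> D'" by auto
    then have "D = D'" using card_subset_eq[OF finD(2)] less.prems by simp
    then show ?thesis by simp
  next
    case False
    then obtain x where x: "x \<in> D" "x \<notin> D'" by auto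
    have "\<not> D' \<subseteq> D"
    proof
      assume "D' \<subseteq> D"
      then have "D' = D" using card_subset_eq[OF finD(1)] less.prems by simp
      then show False using x by simp
    qed
    then obtain y where y: "y \<in> D'" "y \<notin> D" by auto
    define D1 where "D1 = insert y (D - {x})"
    have xyW: "x \<in> W" "y \<in> W" using x y less.prems by auto
    have "\<Psi> (gr (sp D) W) = \<Psi> (gr (sp D1) W)"
      unfolding D1_def using slide[OF sec b dbl, of x y] conn xyW less.prems(1) x(1) y(2) by blast
    also have "\<dots> = \<Psi> (gr (sp D') W)"
    proof (rule less.hyps)
      have "D1 - D' = (D - D') - {x}" unfolding D1_def using y x by auto
      moreover have "card (D - D') > 0" using x finD by (auto simp: card_gt_0_iff)
      moreover have "card (D - D' - {x}) = card (D - D') - 1" using x by simp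
      ultimately show "card (D1 - D') < card (D - D')" by simp
      show "D1 \<subseteq> W" unfolding D1_def using less.prems xyW by auto
      show "D' \<subseteq> W" by fact
      have "card D1 = Suc (card (D - {x}))" unfolding D1_def using y finD by simp
      also have "\<dots> = card D"
      proof -
        have "card D > 0" using x finD by (auto simp: card_gt_0_iff)
        moreover have "card (D - {x}) = card D - 1" using x by simp
        ultimately show ?thesis by linarith
      qed
      finally show "card D1 = card D'" using less.prems by simp
    qed
    finally show ?thesis .
  qed
qed

abbreviation "ws \<equiv> sorted_list_of_set W"

lemma ws: "distinct ws" "set ws = W" using W_fin by auto

lemma Phi_rot_expand:
  "Phi_rot L V v0 \<alpha> \<beta> = (\<lambda>S. \<Sum>D\<in>Pow W. \<alpha> ^ card (W - D) * \<beta> ^ card D * Fl D ws S)"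
  unfolding Phi_rot_def ordered_prod_def using rot_expand[OF ws(1), of \<alpha> \<beta>] ws(2) by simp

lemma span_card_fun:
  "(\<lambda>S. \<Sum>D\<in>Pow W. g (card D) * Fl D ws S) \<in> cspan (spin_rotations L V v0)"
proof -
  define n where "n = card W"
  define N where "N = Suc n"
  define \<omega> where "\<omega> = exp (2 * of_real pi * \<i> / of_nat N)"
  define s :: complex where "s = of_real (1 / sqrt 2)"
  define R where "R j = Phi_rot L V v0 s (\<omega> ^ j * s)" for j :: nat
  define c where "c j = (1 / (s ^ n * of_nat N)) * (\<Sum>k\<in>{..n}. g k * \<omega> ^ (j * (N - k)))" for j :: nat
  have N1: "N \<ge> 1" unfolding N_def by simp
  have s0: "s \<noteq> 0" unfolding s_def by simp
  have cw: "cmod \<omega> = 1" unfolding \<omega>_def by (simp add: norm_exp_eq_Re)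
  have Rin: "R j \<in> spin_rotations L V v0" for j
  proof -
    have cs: "cmod s = 1 / sqrt 2" unfolding s_def norm_of_real by simp
    have "cmod s ^ 2 = 1 / 2" unfolding cs by (simp add: power_divide)
    moreover have "cmod (\<omega> ^ j * s) ^ 2 = 1 / 2"
      using \<open>cmod s ^ 2 = 1 / 2\<close> by (simp add: norm_mult norm_power cw)
    ultimately have "cmod s ^ 2 + cmod (\<omega> ^ j * s) ^ 2 = 1" by simp
    then show ?thesis unfolding R_def spin_rotations_def by blast
  qed
  have Rj: "R j S = s ^ n * (\<Sum>D\<in>Pow W. (\<omega> ^ card D) ^ j * Fl D ws S)" for j S
  proof -
    have "R j S = (\<Sum>D\<in>Pow W. s ^ card (W - D) * (\<omega> ^ j * s) ^ card D * Fl D ws S)"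
      unfolding R_def Phi_rot_expand by simp
    also have "\<dots> = (\<Sum>D\<in>Pow W. s ^ n * ((\<omega> ^ card D) ^ j * Fl D ws S))"
    proof (intro sum.cong refl)
      fix D assume D: "D \<in> Pow W"
      have "card (W - D) + card D = n" unfolding n_def using D W_fin
        by (simp add: card_Diff_subset card_mono finite_subset)
      then have sp: "s ^ card (W - D) * s ^ card D = s ^ n" by (simp only: power_add[symmetric])
      have cm: "(\<omega> ^ j) ^ card D = (\<omega> ^ card D) ^ j" by (simp only: power_mult[symmetric] mult.commute)
      have "s ^ card (W - D) * (\<omega> ^ j * s) ^ card D * Fl D ws S
          = (s ^ card (W - D) * s ^ card D) * ((\<omega> ^ j) ^ card D * Fl D ws S)"
        by (simp only: power_mult_distrib mult_ac)
      then show "s ^ card (W - D) * (\<omega> ^ j * s) ^ card D * Fl D ws S = s ^ n * ((\<omega> ^ card D) ^ j * Fl D ws S)"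
        by (simp only: sp cm)
    qed
    finally show ?thesis by (simp add: sum_distrib_left)
  qed
  have key: "(\<Sum>j<N. c j * R j S) = (\<Sum>D\<in>Pow W. g (card D) * Fl D ws S)" for S
  proof -
    have "(\<Sum>j<N. c j * R j S) = (\<Sum>j<N. \<Sum>k\<in>{..n}. \<Sum>D\<in>Pow W.
            (g k * Fl D ws S / of_nat N) * (\<omega> ^ (N - k + card D)) ^ j)"
    proof (intro sum.cong refl)
      fix j
      define A where "A = (\<Sum>k\<in>{..n}. g k * \<omega> ^ (j * (N - k)))"
      define B where "B = (\<Sum>D\<in>Pow W. (\<omega> ^ card D) ^ j * Fl D ws S)"
      have "c j * R j S = (1 / (s ^ n * of_nat N) * s ^ n) * (A * B)"
        unfolding c_def Rj A_def B_def by (simp only: mult_ac)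
      also have "1 / (s ^ n * of_nat N) * s ^ n = 1 / of_nat N" using s0 by simp
      finally have "c j * R j S = A * B / of_nat N" by simp
      also have "\<dots> = (\<Sum>k\<in>{..n}. \<Sum>D\<in>Pow W. (g k * \<omega> ^ (j * (N - k))) * ((\<omega> ^ card D) ^ j * Fl D ws S) / of_nat N)"
        unfolding A_def B_def sum_product sum_divide_distrib ..
      also have "\<dots> = (\<Sum>k\<in>{..n}. \<Sum>D\<in>Pow W. (g k * Fl D ws S / of_nat N) * (\<omega> ^ (N - k + card D)) ^ j)"
      proof (intro sum.cong refl)
        fix k :: nat and D :: "'v set"
        have e: "(\<omega> ^ (N - k + card D)) ^ j = \<omega> ^ (j * (N - k)) * (\<omega> ^ card D) ^ j"
          by (simp only: power_add power_mult_distrib power_mult[symmetric] mult.commute)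
        show "(g k * \<omega> ^ (j * (N - k))) * ((\<omega> ^ card D) ^ j * Fl D ws S) / of_nat N
            = (g k * Fl D ws S / of_nat N) * (\<omega> ^ (N - k + card D)) ^ j"
          unfolding e by (simp add: field_simps)
      qed
      finally show "c j * R j S = \<dots>" .
    qed
    also have "\<dots> = (\<Sum>k\<in>{..n}. \<Sum>j<N. \<Sum>D\<in>Pow W. (g k * Fl D ws S / of_nat N) * (\<omega> ^ (N - k + card D)) ^ j)"
      by (rule sum.swap)
    also have "\<dots> = (\<Sum>k\<in>{..n}. \<Sum>D\<in>Pow W. \<Sum>j<N. (g k * Fl D ws S / of_nat N) * (\<omega> ^ (N - k + card D)) ^ j)"
      by (intro sum.cong refl sum.swap)
    also have "\<dots> = (\<Sum>D\<in>Pow W. \<Sum>k\<in>{..n}. \<Sum>j<N. (g k * Fl D ws S / of_nat N) * (\<omega> ^ (N - k + card D)) ^ j)"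
      by (rule sum.swap)
    also have "\<dots> = (\<Sum>D\<in>Pow W. \<Sum>k\<in>{..n}. if k = card D then g k * Fl D ws S else 0)"
    proof (intro sum.cong refl)
      fix D k assume D: "D \<in> Pow W" and k: "k \<in> {..n}"
      have cD: "card D < N" using D W_fin unfolding N_def n_def by (simp add: card_mono finite_subset le_imp_less_Suc)
      have kN: "k < N" using k unfolding N_def by simp
      have "(\<Sum>j<N. (g k * Fl D ws S / of_nat N) * (\<omega> ^ (N - k + card D)) ^ j)
          = (g k * Fl D ws S / of_nat N) * (\<Sum>j<N. (\<omega> ^ (N - k + card D)) ^ j)"
        by (simp add: sum_distrib_left)
      also have "\<dots> = (g k * Fl D ws S / of_nat N) * (if k = card D then of_nat N else 0)"
        using root_sum[OF N1, of "N - k + card D"] dvd_window[OF kN cD] unfolding \<omega>_def by simp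
      also have "\<dots> = (if k = card D then g k * Fl D ws S else 0)" using N1 by simp
      finally show "(\<Sum>j<N. (g k * Fl D ws S / of_nat N) * (\<omega> ^ (N - k + card D)) ^ j)
          = (if k = card D then g k * Fl D ws S else 0)" .
    qed
    also have "\<dots> = (\<Sum>D\<in>Pow W. g (card D) * Fl D ws S)"
    proof (intro sum.cong refl)
      fix D assume D: "D \<in> Pow W"
      have "card D \<in> {..n}" using D W_fin unfolding n_def by (simp add: card_mono)
      then show "(\<Sum>k\<in>{..n}. if k = card D then g k * Fl D ws S else 0) = g (card D) * Fl D ws S"
        by (simp add: sum.delta')
    qed
    finally show ?thesis .
  qed
  have "(\<lambda>S. \<Sum>j<N. c j * R j S) \<in> cspan (spin_rotations L V v0)"
    by (rule cspan_sum) (use Rin in auto)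
  moreover have "(\<lambda>S. \<Sum>j<N. c j * R j S) = (\<lambda>S. \<Sum>D\<in>Pow W. g (card D) * Fl D ws S)"
    using key by (intro ext) simp
  ultimately show ?thesis by simp
qed

end


context cons
begin

lemma Phi_up_eq: "Phi_up L V v0 = foldr (\<lambda>v. ad v ((\<lambda>_. Up) v)) ws vacuum"
  unfolding Phi_up_def ordered_prod_def by simp

lemma Phi_up_support: "Phi_up L V v0 S \<noteq> 0 \<Longrightarrow> S \<subseteq> AV \<times> {Up} \<and> card S = card W"
proof -
  assume a: "Phi_up L V v0 S \<noteq> 0"
  have "S \<subseteq> AV \<times> ((\<lambda>_. Up) ` set ws) \<and> card S = length ws"
    using support_prod[of ws "\<lambda>_. Up" S] a ws unfolding Phi_up_eq by simp
  moreover have "(\<lambda>_. Up) ` set ws \<subseteq> {Up}" by auto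
  moreover have "length ws = card W" using W_fin by simp
  ultimately show ?thesis by auto
qed

lemma Phi_up_sector: "Phi_up L V v0 \<in> sector AV (card W)"
  unfolding sector_def using Phi_up_support by auto

lemma Phi_up_nz: "Phi_up L V v0 \<noteq> (\<lambda>S. 0)"
proof
  assume z: "Phi_up L V v0 = (\<lambda>S. 0)"
  have T: "bfree Bl (gr (\<lambda>_. Up) W)" unfolding bfree_def gr_def using white_not_black by auto
  have "Phi_up L V v0 (gr (\<lambda>_. Up) W) = epsl ws"
    unfolding Phi_up_eq using eval_bfree[OF ws(1) _ T, of "\<lambda>_. Up"] ws(2) by simp
  then show False using z epsl_nz[of ws] by simp
qed

lemma Phi_up_energy:
  "H_hub L V t U (Phi_up L V v0) = (\<lambda>S. of_real 0 * Phi_up L V v0 S)"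
proof (rule ext)
  fix S
  have b: "bop V l \<sigma> (Phi_up L V v0) = (\<lambda>S. 0)" if "l \<in> {1..L}" for l \<sigma>
    unfolding Phi_up_eq using bop_prod[of ws l \<sigma> "\<lambda>_. Up"] ws that by simp
  have hop: "(\<Sum>l\<in>{1..L}. \<Sum>\<sigma>\<in>{Up, Dn}. bdag V l \<sigma> (bop V l \<sigma> (Phi_up L V v0)) S) = 0"
    by (intro sum.neutral ballI) (simp add: b bdag_def cdag_zero)
  have hub: "numop (v, Up) (numop (v, Dn) (Phi_up L V v0)) S = 0" for v
  proof -
    have "(v, Up) \<in> S \<and> (v, Dn) \<in> S \<Longrightarrow> Phi_up L V v0 S = 0"
      using Phi_up_support by auto
    then show ?thesis unfolding numop_eq by auto
  qed
  show "H_hub L V t U (Phi_up L V v0) S = of_real 0 * Phi_up L V v0 S"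
    unfolding H_hub_def H_hop_def using hop hub by simp
qed

theorem main_loc:
  assumes conn: "\<forall>\<sigma>. family_connected L V v0 \<sigma> W"
    and t_pos: "t > 0" and U_pos: "U > 0"
  shows "is_ground_energy (H_hub L V t U) (sector AV (card W)) 0
     \<and> (\<forall>\<Psi>\<in>ground_states (H_hub L V t U) (sector AV (card W)) 0.
           \<Psi> \<in> cspan ({Phi_up L V v0} \<union> spin_rotations L V v0))"
proof
  show "is_ground_energy (H_hub L V t U) (sector AV (card W)) 0"
    unfolding is_ground_energy_def
  proof
    show "\<exists>\<Psi>\<in>sector AV (card W). \<Psi> \<noteq> (\<lambda>S. 0) \<and> H_hub L V t U \<Psi> = (\<lambda>S. of_real 0 * \<Psi> S)"
      using Phi_up_sector Phi_up_nz Phi_up_energy by blast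
    show "\<forall>E' \<Psi>. \<Psi> \<in> sector AV (card W) \<longrightarrow> \<Psi> \<noteq> (\<lambda>S. 0) \<longrightarrow>
        H_hub L V t U \<Psi> = (\<lambda>S. of_real E' * \<Psi> S) \<longrightarrow> 0 \<le> E'"
      using eigen_nonneg[OF t_pos U_pos] by blast
  qed
  show "\<forall>\<Psi>\<in>ground_states (H_hub L V t U) (sector AV (card W)) 0.
           \<Psi> \<in> cspan ({Phi_up L V v0} \<union> spin_rotations L V v0)"
  proof
    fix \<Psi> assume g: "\<Psi> \<in> ground_states (H_hub L V t U) (sector AV (card W)) 0"
    then have sec: "\<Psi> \<in> sector AV (card W)" and e: "H_hub L V t U \<Psi> = (\<lambda>S. of_real 0 * \<Psi> S)"
      unfolding ground_states_def by auto
    have b: "\<forall>l\<in>{1..L}. \<forall>\<sigma>. bop V l \<sigma> \<Psi> = (\<lambda>S. 0)"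
      using zero_energy(1)[OF t_pos U_pos e] .
    have dbl: "\<forall>v\<in>AV. \<forall>S. (v, Up) \<in> S \<and> (v, Dn) \<in> S \<longrightarrow> \<Psi> S = 0"
      using zero_energy(2)[OF t_pos U_pos e] .
    have relq: "Rel = (\<lambda>x y. x \<in> W \<and> y \<in> W \<and> directly_connected L V v0 Up x y)"
      by (intro ext) (simp add: Rel_def)
    have cn: "\<forall>v\<in>W. \<forall>v'\<in>W. Rel\<^sup>*\<^sup>* v v'"
      using conn unfolding family_connected_def relq by blast
    define f where "f D = \<Psi> (gr (sp D) W) / epsl ws" for D
    define g where "g k = f (SOME D. D \<subseteq> W \<and> card D = k)" for k
    have gD: "g (card D) = f D" if D: "D \<subseteq> W" for D
    proof -
      have ex: "\<exists>D'. D' \<subseteq> W \<and> card D' = card D" using D by blast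
      define D' where "D' = (SOME D'. D' \<subseteq> W \<and> card D' = card D)"
      have D': "D' \<subseteq> W" "card D' = card D" using someI_ex[OF ex] unfolding D'_def by auto
      have "\<Psi> (gr (sp D') W) = \<Psi> (gr (sp D) W)"
        using card_eq[OF sec b dbl cn D'(1) D D'(2)] .
      then show ?thesis unfolding g_def f_def D'_def[symmetric] by simp
    qed
    have rep: "\<Psi> = (\<lambda>S. \<Sum>D\<in>Pow W. f D * Fl D ws S)"
      unfolding f_def using represent[OF sec b dbl ws] .
    also have "\<dots> = (\<lambda>S. \<Sum>D\<in>Pow W. g (card D) * Fl D ws S)"
      using gD by (intro ext sum.cong refl) auto
    finally have "\<Psi> \<in> cspan (spin_rotations L V v0)" using span_card_fun[of g] by simp
    then show "\<Psi> \<in> cspan ({Phi_up L V v0} \<union> spin_rotations L V v0)"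
      by (rule cspan_mono[rotated]) auto
  qed
qed

end

theorem mainTheorem7:
  fixes L :: nat and V :: "nat \<Rightarrow> ('v::{finite,linorder}) set" and v0 :: "nat \<Rightarrow> 'v"
    and t U :: real
  assumes constr: "valid_construction L V v0"
    and conn: "\<forall>\<sigma>. family_connected L V v0 \<sigma> (whiteV L V v0)"
    and t_pos: "t > 0" and U_pos: "U > 0"
  shows "is_ground_energy (H_hub L V t U) (sector (allV L V) (card (whiteV L V v0))) 0
     \<and> (\<forall>\<Psi>\<in>ground_states (H_hub L V t U) (sector (allV L V) (card (whiteV L V v0))) 0.
           \<Psi> \<in> cspan ({Phi_up L V v0} \<union> spin_rotations L V v0))"
proof -
  interpret cons L V v0 by (rule cons.intro) (rule constr)
  show ?thesis using main_loc[OF conn t_pos U_pos] .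
qed


end
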